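(* Consider a discrete convex single-parameter auction setting with feasibility set $\mathcal A$ and objective $\mathsf{Obj}_\alpha(M)=\alpha\,\mathsf{Rev}(M)+(1-\alpha)\,\mathsf{SW}(M)$ for a fixed $\alpha\in[0,1]$. Then: (1) If the setting is TDI, there exists an auction maximizing $\mathsf{Obj}_\alpha$ over all feasible BIC auctions which is integral. (2) Every feasible DSIC auction that maximizes $\mathsf{Obj}_\alpha$ over all feasible DSIC auctions also maximizes $\mathsf{Obj}_\alpha$ over all feasible BIC auctions. (3) Let $M^\alpha=(\mathbf a,\mathbf p)$ be defined by: for each $\mathbf v\in\mathbf V$, $\mathbf a(\mathbf v)\in\arg\max_{x\in\mathcal A}\sum_{i=1}^n\bar\varphi^\alpha_i(v_i)x_i$, where the selected maximizer depends only on the vector $(\bar\varphi^\alpha_1(v_1),\dots,\bar\varphi^\alpha_n(v_n))$ (a fixed deterministic tie-breaking rule), and $\mathbf p$ is given by the payment formula $p_i(v_{i,k},\mathbf v_{-i})=v_{i,k}\,a_i(v_{i,k},\mathbf v_{-i})-\sum_{l=1}^{k-1}(v_{i,l+1}-v_{i,l})\,a_i(v_{i,l},\mathbf v_{-i})$. Then $M^\alpha$ is DSIC and maximizes $\mathsf{Obj}_\alpha$ over all feasible BIC auctions.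
   Context: There are $n\ge1$ bidders; bidder $i$ has finite value set $V_i=\{v_{i,1}<\dots<v_{i,K_i}\}\subset\mathbb R_+$ and independent value with pmf $f_i$, $f_i(v)>0$ on $V_i$, cdf $F_i$; $\mathbf V=\prod_iV_i$, $\mathbf F$ the product distribution, $\mathbf F_{-i}$ the product over $j\ne i$. Feasibility: $\mathcal A=\{x\in\mathbb R^n: g_j(x)\le0,\ j\in[m]\}\subseteq\mathbb R^n_+$, with each $g_j$ convex and continuously differentiable, and $\mathcal A$ nonempty and compact; an auction $(\mathbf a,\mathbf p)$, $\mathbf a:\mathbf V\to\mathbb R^n_+$, $\mathbf p:\mathbf V\to\mathbb R^n$, is feasible if $\mathbf a(\mathbf v)\in\mathcal A$ for all $\mathbf v$. Utility $u_i(\mathbf b;v_i)=a_i(\mathbf b)v_i-p_i(\mathbf b)$; bids extended to $\bar V_i=V_i\cup\{\varnothing\}$ with $a_i(\varnothing,\cdot)=p_i(\varnothing,\cdot)=0$. DSIC: $u_i(v_i,\mathbf b_{-i};v_i)\ge u_i(b_i,\mathbf b_{-i};v_i)$ for all $i$, $v_i\in V_i$, $b_i\in\bar V_i$, $\mathbf b_{-i}$. BIC: with $A_i(b_i)=\mathbb E_{\mathbf v_{-i}\sim\mathbf F_{-i}}[a_i(b_i,\mathbf v_{-i})]$, $P_i(b_i)=\mathbb E_{\mathbf v_{-i}\sim\mathbf F_{-i}}[p_i(b_i,\mathbf v_{-i})]$, require $A_i(v_i)v_i-P_i(v_i)\ge A_i(b_i)v_i-P_i(b_i)$ for all $i,v_i\in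 V_i,b_i\in\bar V_i$. $\mathsf{Rev}(M)=\mathbb E_{\mathbf v\sim\mathbf F}[\sum_ip_i(\mathbf v)]$, $\mathsf{SW}(M)=\mathbb E_{\mathbf v\sim\mathbf F}[\sum_ia_i(\mathbf v)v_i]$. An auction is integral if $\mathbf a(\mathbf v)\in\mathbb N^n$ for all $\mathbf v$. TDI setting: $\mathcal A=\{x\in\mathbb R^n:Gx\le b\}$ for a rational matrix $G$ and integral vector $b$ such that the system $Gx\le b$ is totally dual integral: for every integral $c\in\mathbb Z^n$ for which $\min\{\psi^\top b:\psi\ge0,\ G^\top\psi=c\}$ is finite, this minimum is attained by an integral $\psi$. Generalized virtual values: $\varphi^\alpha_i(v_{i,k})=v_{i,k}-\alpha(v_{i,k+1}-v_{i,k})\frac{1-F_i(v_{i,k})}{f_i(v_{i,k})}$, $k\in[K_i]$ (second term $0$ for $k=K_i$). Ironed generalized virtual values: let $F^{(i)}_0=0$, $F^{(i)}_k=F_i(v_{i,k})$, $S^{(i)}_0=0$, $S^{(i)}_k=\sum_{j\le k}\varphi^\alpha_i(v_{i,j})f_i(v_{i,j})$, $S^{(i)}$ the piecewise linear interpolation of the points $(F^{(i)}_k,S^{(i)}_k)$, and $H^{(i)}$ its lower convex envelope; $\bar\varphi^\alpha_i(v_{i,k})$ is the slope of $H^{(i)}$ on $(F^{(i)}_{k-1},F^{(i)}_k)$. *)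

theory Defs
  imports "HOL-Analysis.Analysis"
begin

(* Bidders are indexed by a finite type 'n (so n = CARD('n) >= 1).
   V i : finite value set of bidder i, f i : pmf of bidder i on V i.
   Values v_{i,k}, k = 1..K_i, are the elements of V i in increasing order. *)

definition vval :: "('n \<Rightarrow> real set) \<Rightarrow> 'n \<Rightarrow> nat \<Rightarrow> real" where
  "vval V i k = sorted_list_of_set (V i) ! (k - 1)"

definition vidx :: "('n \<Rightarrow> real set) \<Rightarrow> 'n \<Rightarrow> real \<Rightarrow> nat" where
  "vidx V i x = (THE k. k \<in> {1..card (V i)} \<and> vval V i k = x)"

definition cdf :: "('n \<Rightarrow> real set) \<Rightarrow> ('n \<Rightarrow> real \<Rightarrow> real) \<Rightarrow> 'n \<Rightarrow> real \<Rightarrow> real" where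
  "cdf V f i x = (\<Sum>w\<in>{w\<in>V i. w \<le> x}. f i w)"

definition gvv :: "real \<Rightarrow> ('n \<Rightarrow> real set) \<Rightarrow> ('n \<Rightarrow> real \<Rightarrow> real) \<Rightarrow> 'n \<Rightarrow> real \<Rightarrow> real" where
  "gvv \<alpha> V f i x = (let k = vidx V i x in
     x - \<alpha> * (if k < card (V i) then (vval V i (k + 1) - x) * (1 - cdf V f i x) / f i x else 0))"

definition Fpt :: "('n \<Rightarrow> real set) \<Rightarrow> ('n \<Rightarrow> real \<Rightarrow> real) \<Rightarrow> 'n \<Rightarrow> nat \<Rightarrow> real" where
  "Fpt V f i k = (if k = 0 then 0 else cdf V f i (vval V i k))"

definition Spt :: "real \<Rightarrow> ('n \<Rightarrow> real set) \<Rightarrow> ('n \<Rightarrow> real \<Rightarrow> real) \<Rightarrow> 'n \<Rightarrow> nat \<Rightarrow> real" where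
  "Spt \<alpha> V f i k = (\<Sum>j\<in>{1..k}. gvv \<alpha> V f i (vval V i j) * f i (vval V i j))"

(* S^{(i)}: piecewise linear interpolation of the points (F_k, S_k), k = 0..K_i, on [0,1] *)
definition Sinterp :: "real \<Rightarrow> ('n \<Rightarrow> real set) \<Rightarrow> ('n \<Rightarrow> real \<Rightarrow> real) \<Rightarrow> 'n \<Rightarrow> real \<Rightarrow> real" where
  "Sinterp \<alpha> V f i t =
    (if \<exists>k\<in>{1..card (V i)}. Fpt V f i (k - 1) \<le> t \<and> t \<le> Fpt V f i k then
       (let k = (LEAST k. 1 \<le> k \<and> k \<le> card (V i) \<and> Fpt V f i (k - 1) \<le> t \<and> t \<le> Fpt V f i k)
        in Spt \<alpha> V f i (k - 1) + (t - Fpt V f i (k - 1)) / (Fpt V f i k - Fpt V f i (k - 1))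
             * (Spt \<alpha> V f i k - Spt \<alpha> V f i (k - 1)))
     else 0)"

definition Hconv :: "real \<Rightarrow> ('n \<Rightarrow> real set) \<Rightarrow> ('n \<Rightarrow> real \<Rightarrow> real) \<Rightarrow> 'n \<Rightarrow> real \<Rightarrow> real" where
  "Hconv \<alpha> V f i t =
    (SUP h\<in>{h. convex_on {0..1} h \<and> (\<forall>s\<in>{0..1}. h s \<le> Sinterp \<alpha> V f i s)}. h t)"

(* ironed generalized virtual value: slope of H on (F_{k-1}, F_k), H being affine there *)
definition ivv :: "real \<Rightarrow> ('n \<Rightarrow> real set) \<Rightarrow> ('n \<Rightarrow> real \<Rightarrow> real) \<Rightarrow> 'n \<Rightarrow> real \<Rightarrow> real" where
  "ivv \<alpha> V f i x = (let k = vidx V i x in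
     (Hconv \<alpha> V f i (Fpt V f i k) - Hconv \<alpha> V f i (Fpt V f i (k - 1)))
       / (Fpt V f i k - Fpt V f i (k - 1)))"

(* Auctions: a, p :: value profile => bidder => real; profiles are PiE UNIV V *)

definition prof_prob :: "('n::finite \<Rightarrow> real \<Rightarrow> real) \<Rightarrow> ('n \<Rightarrow> real) \<Rightarrow> real" where
  "prof_prob f v = (\<Prod>i\<in>UNIV. f i (v i))"

definition Rev :: "('n::finite \<Rightarrow> real set) \<Rightarrow> ('n \<Rightarrow> real \<Rightarrow> real) \<Rightarrow> (('n \<Rightarrow> real) \<Rightarrow> 'n \<Rightarrow> real) \<Rightarrow> real" where
  "Rev V f p = (\<Sum>v\<in>PiE UNIV V. prof_prob f v * (\<Sum>i\<in>UNIV. p v i))"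

definition SW :: "('n::finite \<Rightarrow> real set) \<Rightarrow> ('n \<Rightarrow> real \<Rightarrow> real) \<Rightarrow> (('n \<Rightarrow> real) \<Rightarrow> 'n \<Rightarrow> real) \<Rightarrow> real" where
  "SW V f a = (\<Sum>v\<in>PiE UNIV V. prof_prob f v * (\<Sum>i\<in>UNIV. a v i * v i))"

definition Obj :: "real \<Rightarrow> ('n::finite \<Rightarrow> real set) \<Rightarrow> ('n \<Rightarrow> real \<Rightarrow> real)
    \<Rightarrow> (('n \<Rightarrow> real) \<Rightarrow> 'n \<Rightarrow> real) \<Rightarrow> (('n \<Rightarrow> real) \<Rightarrow> 'n \<Rightarrow> real) \<Rightarrow> real" where
  "Obj \<alpha> V f a p = \<alpha> * Rev V f p + (1 - \<alpha>) * SW V f a"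

definition feasible :: "(real^'n) set \<Rightarrow> ('n::finite \<Rightarrow> real set) \<Rightarrow> (('n \<Rightarrow> real) \<Rightarrow> 'n \<Rightarrow> real) \<Rightarrow> bool" where
  "feasible A V a \<longleftrightarrow> (\<forall>v\<in>PiE UNIV V. (\<chi> i. a v i) \<in> A)"

definition integral_auction :: "('n::finite \<Rightarrow> real set) \<Rightarrow> (('n \<Rightarrow> real) \<Rightarrow> 'n \<Rightarrow> real) \<Rightarrow> bool" where
  "integral_auction V a \<longleftrightarrow> (\<forall>v\<in>PiE UNIV V. \<forall>i. a v i \<in> \<nat>)"

(* DSIC; the bid "empty" yields allocation and payment 0, i.e. utility 0 *)
definition DSIC :: "('n::finite \<Rightarrow> real set) \<Rightarrow> (('n \<Rightarrow> real) \<Rightarrow> 'n \<Rightarrow> real) \<Rightarrow> (('n \<Rightarrow> real) \<Rightarrow> 'n \<Rightarrow> real) \<Rightarrow> bool" where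
  "DSIC V a p \<longleftrightarrow> (\<forall>i. \<forall>v\<in>PiE UNIV V.
      0 \<le> a v i * v i - p v i \<and>
      (\<forall>b\<in>V i. a (v(i := b)) i * v i - p (v(i := b)) i \<le> a v i * v i - p v i))"

definition interim :: "('n::finite \<Rightarrow> real set) \<Rightarrow> ('n \<Rightarrow> real \<Rightarrow> real) \<Rightarrow> (('n \<Rightarrow> real) \<Rightarrow> 'n \<Rightarrow> real) \<Rightarrow> 'n \<Rightarrow> real \<Rightarrow> real" where
  "interim V f q i b = (\<Sum>w\<in>PiE (UNIV - {i}) V. (\<Prod>j\<in>UNIV - {i}. f j (w j)) * q (w(i := b)) i)"

definition BIC :: "('n::finite \<Rightarrow> real set) \<Rightarrow> ('n \<Rightarrow> real \<Rightarrow> real) \<Rightarrow> (('n \<Rightarrow> real) \<Rightarrow> 'n \<Rightarrow> real) \<Rightarrow> (('n \<Rightarrow> real) \<Rightarrow> 'n \<Rightarrow> real) \<Rightarrow> bool" where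
  "BIC V f a p \<longleftrightarrow> (\<forall>i. \<forall>x\<in>V i.
      0 \<le> interim V f a i x * x - interim V f p i x \<and>
      (\<forall>b\<in>V i. interim V f a i b * x - interim V f p i b \<le> interim V f a i x * x - interim V f p i x))"

definition pay_formula :: "('n \<Rightarrow> real set) \<Rightarrow> (('n \<Rightarrow> real) \<Rightarrow> 'n \<Rightarrow> real) \<Rightarrow> ('n \<Rightarrow> real) \<Rightarrow> 'n \<Rightarrow> real" where
  "pay_formula V a v i = (let k = vidx V i (v i) in
     v i * a v i - (\<Sum>l\<in>{1..<k}. (vval V i (l + 1) - vval V i l) * a (v(i := vval V i l)) i))"

(* Total dual integrality of the system G x <= b (m' rows, G j i the (j,i) entry):
   for every integral c for which min {psi^T b : psi >= 0, G^T psi = c} exists (is finite),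
   it is attained by an integral psi. *)
definition TDI :: "nat \<Rightarrow> (nat \<Rightarrow> 'n::finite \<Rightarrow> real) \<Rightarrow> (nat \<Rightarrow> real) \<Rightarrow> bool" where
  "TDI m' G b \<longleftrightarrow> (\<forall>c :: 'n \<Rightarrow> real. (\<forall>i. c i \<in> \<int>) \<longrightarrow>
     (let S = {\<psi> :: nat \<Rightarrow> real. (\<forall>j<m'. 0 \<le> \<psi> j) \<and> (\<forall>i. (\<Sum>j<m'. G j i * \<psi> j) = c i)};
          obj = (\<lambda>\<psi>. \<Sum>j<m'. \<psi> j * b j)
      in (\<exists>\<psi>\<in>S. \<forall>\<psi>'\<in>S. obj \<psi> \<le> obj \<psi>') \<longrightarrow>
         (\<exists>\<psi>\<in>S. (\<forall>j<m'. \<psi> j \<in> \<int>) \<and> (\<forall>\<psi>'\<in>S. obj \<psi> \<le> obj \<psi>'))))"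

end

theory Submission
  imports Defs
begin

lemma sum_swap_tri:
  fixes g :: "nat \<Rightarrow> nat \<Rightarrow> real"
  shows "(\<Sum>k=1..K. \<Sum>l\<in>{1..<k}. g k l) = (\<Sum>l\<in>{1..<K}. \<Sum>k\<in>{Suc l..K}. g k l)"
proof (induction K)
  case 0 then show ?case by simp
next
  case (Suc K)
  have "(\<Sum>l\<in>{1..<Suc K}. \<Sum>k\<in>{Suc l..Suc K}. g k l)
      = (\<Sum>l\<in>{1..<Suc K}. (\<Sum>k\<in>{Suc l..K}. g k l) + g (Suc K) l)"
    by (intro sum.cong) auto
  also have "\<dots> = (\<Sum>l\<in>{1..<Suc K}. \<Sum>k\<in>{Suc l..K}. g k l) + (\<Sum>l\<in>{1..<Suc K}. g (Suc K) l)"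
    by (simp add: sum.distrib)
  also have "(\<Sum>l\<in>{1..<Suc K}. \<Sum>k\<in>{Suc l..K}. g k l) = (\<Sum>l\<in>{1..<K}. \<Sum>k\<in>{Suc l..K}. g k l)"
    by (cases "K = 0") (auto simp: sum.atLeastLessThan_Suc)
  finally show ?case using Suc by simp
qed

lemma abel_sum:
  fixes D a :: "nat \<Rightarrow> real"
  assumes "1 \<le> K"
  shows "(\<Sum>k=1..K. (D k - D (k-1)) * a k) = D K * a K - D 0 * a 1 + (\<Sum>k\<in>{1..<K}. D k * (a k - a (Suc k)))"
  using assms
proof (induction K rule: nat_induct_at_least)
  case base then show ?case by (simp add: algebra_simps)
next
  case (Suc K)
  then show ?case by (simp add: sum.atLeastLessThan_Suc algebra_simps)
qed

lemma tele_mono: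
  fixes a w :: "nat \<Rightarrow> real"
  assumes "j \<le> k" and mono: "\<And>l l'. j \<le> l \<Longrightarrow> l \<le> l' \<Longrightarrow> l' \<le> k \<Longrightarrow> a l \<le> a l'"
    and winc: "\<And>l. j \<le> l \<Longrightarrow> l < k \<Longrightarrow> w l \<le> w (Suc l)"
  shows "a j * (w k - w j) \<le> (\<Sum>l\<in>{j..<k}. (w (Suc l) - w l) * a l)"
    and "(\<Sum>l\<in>{j..<k}. (w (Suc l) - w l) * a l) \<le> a k * (w k - w j)"
proof -
  have tel: "(\<Sum>l\<in>{j..<k}. (w (Suc l) - w l)) = w k - w j"
    using sum_Suc_diff'[OF assms(1), of w] by simp
  have "(\<Sum>l\<in>{j..<k}. (w (Suc l) - w l) * a j) \<le> (\<Sum>l\<in>{j..<k}. (w (Suc l) - w l) * a l)"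
    by (intro sum_mono mult_left_mono) (auto intro: mono winc)
  moreover have "a j * (w k - w j) = (\<Sum>l\<in>{j..<k}. (w (Suc l) - w l) * a j)"
    unfolding tel[symmetric] sum_distrib_left by (simp add: mult.commute)
  ultimately show "a j * (w k - w j) \<le> (\<Sum>l\<in>{j..<k}. (w (Suc l) - w l) * a l)" by simp
  have "(\<Sum>l\<in>{j..<k}. (w (Suc l) - w l) * a l) \<le> (\<Sum>l\<in>{j..<k}. (w (Suc l) - w l) * a k)"
    by (intro sum_mono mult_left_mono) (auto intro: mono winc)
  moreover have "a k * (w k - w j) = (\<Sum>l\<in>{j..<k}. (w (Suc l) - w l) * a k)"
    unfolding tel[symmetric] sum_distrib_left by (simp add: mult.commute)
  ultimately show "(\<Sum>l\<in>{j..<k}. (w (Suc l) - w l) * a l) \<le> a k * (w k - w j)" by simp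
qed

definition "oF q k = (\<Sum>j=1..k. q j :: real)"
definition "ophi K w q \<alpha> k = w k - \<alpha> * (if k < K then (w (Suc k) - w k) * (1 - oF q k) / q k else (0::real))"
definition "oS K w q \<alpha> k = (\<Sum>j=1..k. ophi K w q \<alpha> j * q j)"

locale oned =
  fixes K :: nat and w q h :: "nat \<Rightarrow> real" and \<alpha> :: real
  assumes K1: "1 \<le> K"
    and qpos: "\<And>k. 1 \<le> k \<Longrightarrow> k \<le> K \<Longrightarrow> 0 < q k"
    and winc: "\<And>k. 1 \<le> k \<Longrightarrow> k < K \<Longrightarrow> w k < w (Suc k)"
    and FK: "oF q K = 1"
    and h0: "h 0 = 0"
    and hK': "h K = oS K w q \<alpha> K"
    and hle': "\<And>k. k \<le> K \<Longrightarrow> h k \<le> oS K w q \<alpha> k"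
begin

abbreviation "F \<equiv> oF q"
abbreviation "phi \<equiv> ophi K w q \<alpha>"
abbreviation "S \<equiv> oS K w q \<alpha>"
definition "phib k = (h k - h (k - 1)) / q k"
lemmas F_def = oF_def[of q] and phi_def = ophi_def[of K w q \<alpha>] and S_def = oS_def[of K w q \<alpha>]

lemma phiq: "1 \<le> k \<Longrightarrow> k \<le> K \<Longrightarrow>
  q k * phi k = q k * w k - \<alpha> * (if k < K then (w (Suc k) - w k) * (1 - F k) else 0)"
  using qpos[of k] by (auto simp: phi_def field_simps)

lemma one_minus_F: "l \<le> K \<Longrightarrow> 1 - F l = (\<Sum>k\<in>{Suc l..K}. q k)"
proof -
  assume l: "l \<le> K"
  have "(\<Sum>j=1..K. q j) = (\<Sum>j=1..l. q j) + (\<Sum>k\<in>{Suc l..K}. q k)"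
    using l sum.ub_add_nat[of 1 l q "K - l"] by simp
  then show ?thesis using FK by (simp add: F_def)
qed

lemma sum_phi: "(\<Sum>k=1..K. q k * phi k * a k) = (\<Sum>k=1..K. q k * w k * a k)
   - \<alpha> * (\<Sum>l\<in>{1..<K}. (w (Suc l) - w l) * (1 - F l) * a l)"
proof -
  have "(\<Sum>k=1..K. q k * phi k * a k) = (\<Sum>k=1..K. q k * w k * a k
      - \<alpha> * ((if k < K then (w (Suc k) - w k) * (1 - F k) else 0) * a k))"
    by (intro sum.cong refl) (simp add: phiq algebra_simps)
  also have "\<dots> = (\<Sum>k=1..K. q k * w k * a k)
      - \<alpha> * (\<Sum>k=1..K. (if k < K then (w (Suc k) - w k) * (1 - F k) else 0) * a k)"
    by (simp add: sum_subtractf sum_distrib_left)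
  also have "(\<Sum>k=1..K. (if k < K then (w (Suc k) - w k) * (1 - F k) else 0) * a k)
     = (\<Sum>l\<in>{1..<K}. (w (Suc l) - w l) * (1 - F l) * a l)"
  proof -
    have "{1..K} = insert K {1..<K}" using K1 by auto
    then show ?thesis by (simp add: sum.insert)
  qed
  finally show ?thesis .
qed

lemma payment_sum: "(\<Sum>k=1..K. q k * (\<Sum>l\<in>{1..<k}. d l * a l))
    = (\<Sum>l\<in>{1..<K}. d l * a l * (1 - F l))"
proof -
  have "(\<Sum>k=1..K. q k * (\<Sum>l\<in>{1..<k}. d l * a l)) = (\<Sum>k=1..K. \<Sum>l\<in>{1..<k}. q k * (d l * a l))"
    by (simp add: sum_distrib_left)
  also have "\<dots> = (\<Sum>l\<in>{1..<K}. \<Sum>k\<in>{Suc l..K}. q k * (d l * a l))"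
    by (rule sum_swap_tri)
  also have "\<dots> = (\<Sum>l\<in>{1..<K}. d l * a l * (1 - F l))"
  proof (intro sum.cong refl)
    fix l assume l: "l \<in> {1..<K}"
    have "(\<Sum>k\<in>{Suc l..K}. q k * (d l * a l)) = (\<Sum>k\<in>{Suc l..K}. q k) * (d l * a l)"
      by (simp add: sum_distrib_right)
    also have "\<dots> = d l * a l * (1 - F l)" using l one_minus_F[of l] by simp
    finally show "(\<Sum>k\<in>{Suc l..K}. q k * (d l * a l)) = d l * a l * (1 - F l)" .
  qed
  finally show ?thesis .
qed

lemma S_diff: "1 \<le> k \<Longrightarrow> S k - S (k - 1) = phi k * q k"
  by (cases k) (auto simp: S_def)

lemma iron: "(\<Sum>k=1..K. q k * phi k * a k) = (\<Sum>k=1..K. q k * phib k * a k)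
   + (\<Sum>k\<in>{1..<K}. (S k - h k) * (a k - a (Suc k)))"
proof -
  define D where "D k = S k - h k" for k
  have "(\<Sum>k=1..K. q k * phi k * a k) - (\<Sum>k=1..K. q k * phib k * a k)
      = (\<Sum>k=1..K. (D k - D (k - 1)) * a k)"
    unfolding sum_subtractf[symmetric]
  proof (intro sum.cong refl)
    fix k assume k: "k \<in> {1..K}"
    have B: "q k * phib k = h k - h (k - 1)" using qpos[of k] k by (simp add: phib_def)
    have A: "q k * phi k = S k - S (k - 1)" using S_diff[of k] k by (simp add: mult.commute)
    have "q k * phi k * a k - q k * phib k * a k = (q k * phi k - q k * phib k) * a k"
      by (simp add: algebra_simps)
    also have "\<dots> = (D k - D (k - 1)) * a k" unfolding A B D_def by (simp add: algebra_simps)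
    finally show "q k * phi k * a k - q k * phib k * a k = (D k - D (k - 1)) * a k" .
  qed
  also have "\<dots> = (\<Sum>k\<in>{1..<K}. D k * (a k - a (Suc k)))"
    using abel_sum[OF K1, of D a] by (simp add: D_def hK' h0 S_def)
  finally show ?thesis by (simp add: D_def)
qed


lemma obj_Pm: "\<alpha> * (\<Sum>k=1..K. q k * (w k * a k - (\<Sum>l\<in>{1..<k}. (w (Suc l) - w l) * a l)))
    + (1 - \<alpha>) * (\<Sum>k=1..K. q k * w k * a k) = (\<Sum>k=1..K. q k * phi k * a k)"
proof -
  have gen: "\<And>X Y::real. \<alpha> * (X - Y) + (1 - \<alpha>) * X = X - \<alpha> * Y" by (simp add: algebra_simps)
  have "(\<Sum>k=1..K. q k * (w k * a k - (\<Sum>l\<in>{1..<k}. (w (Suc l) - w l) * a l)))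
     = (\<Sum>k=1..K. q k * w k * a k) - (\<Sum>k=1..K. q k * (\<Sum>l\<in>{1..<k}. (w (Suc l) - w l) * a l))"
    by (simp add: sum_subtractf right_diff_distrib mult.assoc)
  also have "(\<Sum>k=1..K. q k * (\<Sum>l\<in>{1..<k}. (w (Suc l) - w l) * a l))
      = (\<Sum>l\<in>{1..<K}. (w (Suc l) - w l) * (1 - F l) * a l)"
    unfolding payment_sum by (intro sum.cong refl) (simp add: algebra_simps)
  finally have E: "(\<Sum>k=1..K. q k * (w k * a k - (\<Sum>l\<in>{1..<k}. (w (Suc l) - w l) * a l)))
     = (\<Sum>k=1..K. q k * w k * a k) - (\<Sum>l\<in>{1..<K}. (w (Suc l) - w l) * (1 - F l) * a l)" .
  show ?thesis unfolding E sum_phi by (rule gen)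
qed

theorem mech_M:
  assumes ic: "\<And>k. 1 \<le> k \<Longrightarrow> k < K \<Longrightarrow> h k < S k \<Longrightarrow> a k = a (Suc k)"
  shows "\<alpha> * (\<Sum>k=1..K. q k * (w k * a k - (\<Sum>l\<in>{1..<k}. (w (Suc l) - w l) * a l)))
    + (1 - \<alpha>) * (\<Sum>k=1..K. q k * w k * a k) = (\<Sum>k=1..K. q k * phib k * a k)"
proof -
  have "(\<Sum>k\<in>{1..<K}. (S k - h k) * (a k - a (Suc k))) = 0"
  proof (intro sum.neutral ballI)
    fix k assume k: "k \<in> {1..<K}"
    show "(S k - h k) * (a k - a (Suc k)) = 0"
    proof (cases "h k < S k")
      case True then show ?thesis using ic[of k] k by simp
    next
      case False then show ?thesis using hle'[of k] k by simp
    qed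
  qed
  then show ?thesis unfolding obj_Pm iron by simp
qed

theorem bic_bound:
  assumes a0: "0 \<le> \<alpha>"
    and ir: "0 \<le> w 1 * A 1 - P 1"
    and ic: "\<And>j k. 1 \<le> j \<Longrightarrow> j \<le> K \<Longrightarrow> 1 \<le> k \<Longrightarrow> k \<le> K \<Longrightarrow> w k * A j - P j \<le> w k * A k - P k"
  shows "\<alpha> * (\<Sum>k=1..K. q k * P k) + (1 - \<alpha>) * (\<Sum>k=1..K. q k * w k * A k) \<le> (\<Sum>k=1..K. q k * phib k * A k)"
proof -
  have mono: "A k \<le> A (Suc k)" if k: "1 \<le> k" "k < K" for k
  proof -
    have 1: "w (Suc k) * A k - P k \<le> w (Suc k) * A (Suc k) - P (Suc k)" using ic[of k "Suc k"] k by simp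
    have 2: "w k * A (Suc k) - P (Suc k) \<le> w k * A k - P k" using ic[of "Suc k" k] k by simp
    have "0 \<le> (w (Suc k) - w k) * (A (Suc k) - A k)" using 1 2 by (simp add: algebra_simps)
    moreover have "0 < w (Suc k) - w k" using winc[OF k] by simp
    ultimately show ?thesis by (simp add: zero_le_mult_iff)
  qed
  have U: "(\<Sum>l\<in>{1..<k}. (w (Suc l) - w l) * A l) \<le> w k * A k - P k" if "1 \<le> k" "k \<le> K" for k
    using that
  proof (induction k rule: nat_induct_at_least)
    case base then show ?case using ir by simp
  next
    case (Suc k)
    have "w (Suc k) * A k - P k \<le> w (Suc k) * A (Suc k) - P (Suc k)" using ic[of k "Suc k"] Suc by simp
    moreover have "w (Suc k) * A k - P k = (w k * A k - P k) + (w (Suc k) - w k) * A k" by (simp add: algebra_simps)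
    moreover have "(\<Sum>l\<in>{1..<Suc k}. (w (Suc l) - w l) * A l) = (\<Sum>l\<in>{1..<k}. (w (Suc l) - w l) * A l) + (w (Suc k) - w k) * A k"
      using Suc by (simp add: sum.atLeastLessThan_Suc)
    ultimately show ?case using Suc by simp
  qed
  have "\<alpha> * (\<Sum>k=1..K. q k * P k) \<le> \<alpha> * (\<Sum>k=1..K. q k * (w k * A k - (\<Sum>l\<in>{1..<k}. (w (Suc l) - w l) * A l)))"
  proof (rule mult_left_mono[OF sum_mono a0])
    fix k assume k: "k \<in> {1..K}"
    show "q k * P k \<le> q k * (w k * A k - (\<Sum>l\<in>{1..<k}. (w (Suc l) - w l) * A l))"
      using U[of k] k qpos[of k] by (intro mult_left_mono) auto
  qed
  then have "\<alpha> * (\<Sum>k=1..K. q k * P k) + (1 - \<alpha>) * (\<Sum>k=1..K. q k * w k * A k) \<le> (\<Sum>k=1..K. q k * phi k * A k)"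
    unfolding obj_Pm[symmetric] by simp
  also have "\<dots> \<le> (\<Sum>k=1..K. q k * phib k * A k)"
  proof -
    have "(\<Sum>k\<in>{1..<K}. (S k - h k) * (A k - A (Suc k))) \<le> 0"
    proof (intro sum_nonpos)
      fix k assume k: "k \<in> {1..<K}"
      show "(S k - h k) * (A k - A (Suc k)) \<le> 0"
        using hle'[of k] mono[of k] k by (intro mult_nonneg_nonpos) auto
    qed
    then show ?thesis unfolding iron by simp
  qed
  finally show ?thesis .
qed

end

locale bidder =
  fixes V :: "'n \<Rightarrow> real set" and f :: "'n \<Rightarrow> real \<Rightarrow> real" and i :: 'n and \<alpha> :: real
  assumes fin: "finite (V i)" and ne: "V i \<noteq> {}"
    and fpos: "\<And>x. x \<in> V i \<Longrightarrow> 0 < f i x" and fsum: "(\<Sum>x\<in>V i. f i x) = 1"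
begin

abbreviation "L \<equiv> sorted_list_of_set (V i)"
abbreviation "K \<equiv> card (V i)"
abbreviation "w \<equiv> vval V i"
abbreviation "q \<equiv> \<lambda>k. f i (vval V i k)"

lemma setL: "set L = V i" and lenL: "length L = K" and sortL: "sorted_wrt (<) L"
  using fin by (auto simp: sorted_list_of_set.strict_sorted_key_list_of_set)

lemma K1: "1 \<le> K" using fin ne by (simp add: Suc_le_eq card_gt_0_iff)

lemma w_def': "w k = L ! (k - 1)" by (simp add: vval_def)

lemma wmem: "1 \<le> k \<Longrightarrow> k \<le> K \<Longrightarrow> w k \<in> V i"
  unfolding w_def' using setL lenL by (metis Suc_le_eq diff_less le_eq_less_or_eq less_le_trans nth_mem zero_less_one)

lemma wlt: "1 \<le> j \<Longrightarrow> j < k \<Longrightarrow> k \<le> K \<Longrightarrow> w j < w k"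
proof -
  assume a: "1 \<le> j" "j < k" "k \<le> K"
  show "w j < w k" unfolding w_def' using sorted_wrt_nth_less[OF sortL, of "j - 1" "k - 1"] a lenL by simp
qed

lemma wle: "1 \<le> j \<Longrightarrow> j \<le> k \<Longrightarrow> k \<le> K \<Longrightarrow> w j \<le> w k"
  using wlt[of j k] by (cases "j = k") auto

lemma w_inj: "inj_on w {1..K}"
proof (rule inj_onI)
  fix j k assume "j \<in> {1..K}" "k \<in> {1..K}" "w j = w k"
  then show "j = k" using wlt[of j k] wlt[of k j] by (cases j k rule: linorder_cases) auto
qed

lemma w_img: "w ` {1..K} = V i"
proof
  show "w ` {1..K} \<subseteq> V i" using wmem by auto
  show "V i \<subseteq> w ` {1..K}"
  proof
    fix x assume "x \<in> V i"
    then obtain j where j: "j < length L" "L ! j = x" using setL by (metis in_set_conv_nth)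
    then have "w (Suc j) = x" "Suc j \<in> {1..K}" using lenL by (auto simp: w_def')
    then show "x \<in> w ` {1..K}" by force
  qed
qed

lemma w_bij: "bij_betw w {1..K} (V i)"
  using w_inj w_img by (simp add: bij_betw_def)

lemma vidx_w: "1 \<le> k \<Longrightarrow> k \<le> K \<Longrightarrow> vidx V i (w k) = k"
  unfolding vidx_def
  by (rule the_equality) (auto dest: inj_onD[OF w_inj])

lemma vidx_mem: assumes "x \<in> V i" shows "vidx V i x \<in> {1..K}" "w (vidx V i x) = x"
proof -
  obtain k where "k \<in> {1..K}" "w k = x" using assms w_img by force
  then show "vidx V i x \<in> {1..K}" "w (vidx V i x) = x" using vidx_w by auto
qed

lemma sum_V: "(\<Sum>x\<in>V i. g x) = (\<Sum>k=1..K. g (w k))"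
  using sum.reindex_bij_betw[OF w_bij, of g] by simp

lemma qpos: "1 \<le> k \<Longrightarrow> k \<le> K \<Longrightarrow> 0 < q k" using fpos wmem by auto

lemma cdf_w: assumes "1 \<le> k" "k \<le> K" shows "cdf V f i (w k) = oF q k"
proof -
  have "{x\<in>V i. x \<le> w k} = w ` {1..k}"
  proof
    show "w ` {1..k} \<subseteq> {x\<in>V i. x \<le> w k}" using assms wmem wle by auto
    show "{x\<in>V i. x \<le> w k} \<subseteq> w ` {1..k}"
    proof
      fix x assume x: "x \<in> {x\<in>V i. x \<le> w k}"
      then obtain j where j: "j \<in> {1..K}" "w j = x" using w_img by force
      have "j \<le> k" using x j wlt[of k j] assms by (cases "k < j") auto
      then show "x \<in> w ` {1..k}" using j by auto
    qed
  qed
  moreover have "inj_on w {1..k}" using w_inj assms by (auto intro: inj_on_subset)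
  ultimately show ?thesis by (simp add: cdf_def oF_def sum.reindex)
qed

lemma FK: "oF q K = 1" using fsum sum_V[of "f i"] by (simp add: oF_def)

lemma Fpt_eq: "k \<le> K \<Longrightarrow> Fpt V f i k = oF q k"
  by (cases "k = 0") (auto simp: Fpt_def oF_def cdf_w)

lemma gvv_w: "1 \<le> k \<Longrightarrow> k \<le> K \<Longrightarrow> gvv \<alpha> V f i (w k) = ophi K w q \<alpha> k"
  by (simp add: gvv_def ophi_def vidx_w cdf_w)

lemma Spt_eq: "k \<le> K \<Longrightarrow> Spt \<alpha> V f i k = oS K w q \<alpha> k"
  unfolding Spt_def oS_def by (intro sum.cong refl) (simp add: gvv_w)

lemma F_strict: "k < K \<Longrightarrow> oF q k < oF q (Suc k)"
  using qpos[of "Suc k"] by (simp add: oF_def)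

lemma F_mono: "j \<le> k \<Longrightarrow> k \<le> K \<Longrightarrow> oF q j \<le> oF q k"
proof -
  assume "j \<le> k" "k \<le> K"
  moreover have "\<And>b. 1 \<le> b \<Longrightarrow> b \<le> K \<Longrightarrow> 0 \<le> q b" using qpos by (simp add: less_imp_le)
  ultimately show ?thesis unfolding oF_def
    by (intro sum_mono2) auto
qed

end

context bidder begin

abbreviation "FF \<equiv> oF q"
abbreviation "SS \<equiv> oS K w q \<alpha>"
abbreviation "Si \<equiv> Sinterp \<alpha> V f i"
abbreviation "H \<equiv> Hconv \<alpha> V f i"

lemma F_diff: "1 \<le> k \<Longrightarrow> FF k - FF (k - 1) = q k"
  by (cases k) (auto simp: oF_def)

lemma F0: "FF 0 = 0" by (simp add: oF_def)
lemma S0: "SS 0 = 0" by (simp add: oS_def)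

lemma F_lt: "j < k \<Longrightarrow> k \<le> K \<Longrightarrow> FF j < FF k"
proof (induction k)
  case 0 then show ?case by simp
next
  case (Suc k)
  then show ?case using F_strict[of k] by (cases "j = k") auto
qed

lemma Si_formula:
  assumes k: "1 \<le> k" "k \<le> K" and t: "FF (k - 1) \<le> t" "t \<le> FF k"
  shows "Si t = SS (k - 1) + (t - FF (k - 1)) / (FF k - FF (k - 1)) * (SS k - SS (k - 1))"
proof -
  define P where "P k \<longleftrightarrow> 1 \<le> k \<and> k \<le> K \<and> Fpt V f i (k - 1) \<le> t \<and> t \<le> Fpt V f i k" for k
  have Pk: "P k" using k t by (simp add: P_def Fpt_eq)
  have ex: "\<exists>k\<in>{1..K}. Fpt V f i (k - 1) \<le> t \<and> t \<le> Fpt V f i k" using Pk by (auto simp: P_def)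
  define k' where "k' = (LEAST k. P k)"
  have Pk': "P k'" using LeastI[of P k] Pk k'_def by simp
  have kk': "k' \<le> k" using Least_le[of P k] Pk k'_def by simp
  have val: "Si t = Spt \<alpha> V f i (k' - 1) + (t - Fpt V f i (k' - 1)) / (Fpt V f i k' - Fpt V f i (k' - 1))
        * (Spt \<alpha> V f i k' - Spt \<alpha> V f i (k' - 1))"
    unfolding Sinterp_def using ex by (simp add: k'_def P_def Let_def)
  have k'1: "1 \<le> k'" "k' \<le> K" using Pk' by (auto simp: P_def)
  have t': "FF (k' - 1) \<le> t" "t \<le> FF k'" using Pk' k'1 by (auto simp: P_def Fpt_eq)
  have val2: "Si t = SS (k' - 1) + (t - FF (k' - 1)) / (FF k' - FF (k' - 1)) * (SS k' - SS (k' - 1))"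
    using val k'1 by (simp add: Fpt_eq Spt_eq)
  show ?thesis
  proof (cases "k' = k")
    case True then show ?thesis using val2 by simp
  next
    case False
    then have lt: "k' < k" using kk' by simp
    have "k' = k - 1"
    proof (rule ccontr)
      assume "k' \<noteq> k - 1"
      then have "k' < k - 1" using lt by simp
      then have "FF k' < FF (k - 1)" using F_lt[of k' "k - 1"] k by simp
      then show False using t t' by simp
    qed
    then have teq: "t = FF (k - 1)" using t t' by simp
    have "FF k' - FF (k' - 1) \<noteq> 0" using F_diff[of k'] qpos[of k'] k'1 by simp
    then show ?thesis using val2 teq \<open>k' = k - 1\<close> by simp
  qed
qed

lemma Si_at: assumes "k \<le> K" shows "Si (FF k) = SS k"
proof (cases "k = 0")
  case True
  then show ?thesis using Si_formula[of 1 "FF 0"] K1 F_mono[of 0 1] by (simp add: F0 S0)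
next
  case False
  have "FF k - FF (k - 1) \<noteq> 0" using F_diff[of k] qpos[of k] False assms by simp
  then show ?thesis using Si_formula[of k "FF k"] False assms F_mono[of "k - 1" k] by simp
qed

lemma affine_le_Si:
  assumes k: "1 \<le> k" "k \<le> K" and t: "FF (k - 1) \<le> t" "t \<le> FF k"
    and l1: "c + m * FF (k - 1) \<le> SS (k - 1)" and l2: "c + m * FF k \<le> SS k"
  shows "c + m * t \<le> Si t"
proof -
  define a b where "a = FF (k - 1)" and "b = FF k"
  define u where "u = (t - a) / (b - a)"
  have ab: "a < b" unfolding a_def b_def using F_lt[of "k - 1" k] k by simp
  have u01: "0 \<le> u" "u \<le> 1" using t ab by (auto simp: u_def a_def b_def divide_le_eq_1)
  have ub: "u * (b - a) = t - a" using ab by (simp add: u_def)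
  have tu: "t = (1 - u) * a + u * b" using ub by (simp add: algebra_simps)
  have "Si t = SS (k - 1) + u * (SS k - SS (k - 1))"
    using Si_formula[OF k t] by (simp add: u_def a_def b_def)
  also have "\<dots> = (1 - u) * SS (k - 1) + u * SS k" by (simp add: algebra_simps)
  finally have "Si t = (1 - u) * SS (k - 1) + u * SS k" .
  moreover have "c + m * t = (1 - u) * (c + m * a) + u * (c + m * b)"
    by (subst tu) (simp add: algebra_simps)
  moreover have "(1 - u) * (c + m * a) \<le> (1 - u) * SS (k - 1)" using l1 u01 by (simp add: a_def mult_left_mono)
  moreover have "u * (c + m * b) \<le> u * SS k" using l2 u01 by (simp add: b_def mult_left_mono)
  ultimately show ?thesis by simp
qed

lemma cover: assumes "0 \<le> t" "t \<le> 1" shows "\<exists>k. 1 \<le> k \<and> k \<le> K \<and> FF (k - 1) \<le> t \<and> t \<le> FF k"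
proof (cases "t = 0")
  case True then show ?thesis using K1 F_mono[of 0 1] by (intro exI[of _ 1]) (simp add: F0)
next
  case False
  define P where "P k \<longleftrightarrow> t \<le> FF k" for k
  have PK: "P K" using assms FK by (simp add: P_def)
  define k where "k = (LEAST k. P k)"
  have Pk: "P k" using LeastI[of P K] PK k_def by simp
  have kK: "k \<le> K" using Least_le[of P K] PK k_def by simp
  have k1: "1 \<le> k" using Pk False assms by (cases k) (auto simp: P_def F0)
  have "\<not> P (k - 1)" using not_less_Least[of "k - 1" P] k1 k_def by simp
  then show ?thesis using k1 kK Pk by (intro exI[of _ k]) (auto simp: P_def)
qed

lemma affine_le_Si_global:
  assumes "\<And>k. k \<le> K \<Longrightarrow> c + m * FF k \<le> SS k" and "0 \<le> t" "t \<le> 1"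
  shows "c + m * t \<le> Si t"
proof -
  obtain k where k: "1 \<le> k" "k \<le> K" "FF (k - 1) \<le> t" "t \<le> FF k" using cover assms by blast
  show ?thesis by (rule affine_le_Si[OF k]) (use assms k in auto)
qed


lemma convex_on_max2:
  fixes g1 g2 :: "real \<Rightarrow> real"
  assumes "convex_on S g1" "convex_on S g2"
  shows "convex_on S (\<lambda>x. max (g1 x) (g2 x))"
proof (rule convex_onI)
  show "convex S" using assms(1) by (simp add: convex_on_def)
  fix t :: real and x y assume t: "0 < t" "t < 1" and xy: "x \<in> S" "y \<in> S"
  have 1: "g1 ((1 - t) *\<^sub>R x + t *\<^sub>R y) \<le> (1 - t) * g1 x + t * g1 y"
    using convex_onD[OF assms(1)] t xy by simp
  have 2: "g2 ((1 - t) *\<^sub>R x + t *\<^sub>R y) \<le> (1 - t) * g2 x + t * g2 y"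
    using convex_onD[OF assms(2)] t xy by simp
  have "(1 - t) * g1 x + t * g1 y \<le> (1 - t) * max (g1 x) (g2 x) + t * max (g1 y) (g2 y)"
    using t by (intro add_mono mult_left_mono) auto
  moreover have "(1 - t) * g2 x + t * g2 y \<le> (1 - t) * max (g1 x) (g2 x) + t * max (g1 y) (g2 y)"
    using t by (intro add_mono mult_left_mono) auto
  ultimately show "max (g1 ((1 - t) *\<^sub>R x + t *\<^sub>R y)) (g2 ((1 - t) *\<^sub>R x + t *\<^sub>R y))
      \<le> (1 - t) * max (g1 x) (g2 x) + t * max (g1 y) (g2 y)" using 1 2 by linarith
qed

lemma convex_on_affine: fixes c m :: real shows "convex_on {0..1::real} (\<lambda>t. c + m * t)"
  by (rule convex_onI) (auto simp: algebra_simps)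

lemma conv3:
  fixes g :: "real \<Rightarrow> real"
  assumes g: "convex_on {0..1} g" and abc: "0 \<le> a" "a < b" "b < c" "c \<le> 1"
  shows "(g b - g a) * (c - b) \<le> (g c - g b) * (b - a)"
proof -
  define t where "t = (b - a) / (c - a)"
  have t01: "0 \<le> t" "t \<le> 1" using abc by (auto simp: t_def)
  have tt: "t * (c - a) = b - a" using abc by (simp add: t_def)
  have bt: "(1 - t) *\<^sub>R a + t *\<^sub>R c = b" using tt by (simp add: algebra_simps)
  have "g b \<le> (1 - t) * g a + t * g c" using convex_onD[OF g t01, of a c] abc bt by simp
  then have "(c - a) * g b \<le> (c - a) * ((1 - t) * g a + t * g c)"
    using abc by (intro mult_left_mono) auto
  also have "(c - a) * ((1 - t) * g a + t * g c) = ((c - a) * (1 - t)) * g a + ((c - a) * t) * g c"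
    by (simp add: algebra_simps)
  also have "(c - a) * (1 - t) = c - b" using tt by (simp add: algebra_simps)
  also have "(c - a) * t = b - a" using tt by (simp add: algebra_simps)
  finally show ?thesis by (simp add: algebra_simps)
qed

definition "Cs = {h. convex_on {0..1} h \<and> (\<forall>s\<in>{0..1}. h s \<le> Si s)}"

lemma H_eq: "H t = (SUP h\<in>Cs. h t)" by (simp add: Hconv_def Cs_def)

lemma bddC: "t \<in> {0..1} \<Longrightarrow> bdd_above ((\<lambda>h. h t) ` Cs)"
  by (rule bdd_aboveI[of _ "Si t"]) (auto simp: Cs_def)

lemma Hup: "h \<in> Cs \<Longrightarrow> t \<in> {0..1} \<Longrightarrow> h t \<le> H t"
  unfolding H_eq by (rule cSUP_upper[OF _ bddC])

lemma affine_in_C: "(\<And>k. k \<le> K \<Longrightarrow> c + m * FF k \<le> SS k) \<Longrightarrow> (\<lambda>t. c + m * t) \<in> Cs"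
  unfolding Cs_def using convex_on_affine affine_le_Si_global by auto

lemma wit0: "(\<lambda>t. 0 + (- ((\<Sum>k=1..K. \<bar>SS k\<bar>) / q 1)) * t) \<in> Cs"
proof (rule affine_in_C)
  fix k assume k: "k \<le> K"
  define M where "M = (\<Sum>k=1..K. \<bar>SS k\<bar>) / q 1"
  have q1: "0 < q 1" using qpos K1 by simp
  have M0: "0 \<le> M" using q1 by (simp add: M_def)
  show "0 + - ((\<Sum>k=1..K. \<bar>SS k\<bar>) / q 1) * FF k \<le> SS k"
  proof (cases "k = 0")
    case True then show ?thesis by (simp add: F0 S0)
  next
    case False
    have "q 1 \<le> FF k" using F_mono[of 1 k] k False by (simp add: oF_def)
    then have "M * q 1 \<le> M * FF k" using M0 by (rule mult_left_mono)
    moreover have "M * q 1 = (\<Sum>k=1..K. \<bar>SS k\<bar>)" using q1 by (simp add: M_def)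
    moreover have "\<bar>SS k\<bar> \<le> (\<Sum>k=1..K. \<bar>SS k\<bar>)"
      using k False by (intro member_le_sum) auto
    moreover have "(\<Sum>k=1..K. \<bar>SS k\<bar>) / q 1 * FF k = M * FF k" by (simp add: M_def)
    ultimately show ?thesis by linarith
  qed
qed

lemma Cne: "Cs \<noteq> {}" using wit0 by auto

lemma Hle: "t \<in> {0..1} \<Longrightarrow> H t \<le> Si t"
  unfolding H_eq by (rule cSUP_least[OF Cne]) (auto simp: Cs_def)

lemma H_convex: "convex_on {0..1} H"
proof (rule convex_onI)
  show "convex {0..1::real}" by simp
  fix t x y :: real assume t: "0 < t" "t < 1" and xy: "x \<in> {0..1}" "y \<in> {0..1}"
  have "(1 - t) * x + t * y \<le> (1 - t) * 1 + t * 1"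
    using t xy by (intro add_mono mult_left_mono) auto
  moreover have "0 \<le> (1 - t) * x + t * y" using t xy by simp
  ultimately have p: "(1 - t) *\<^sub>R x + t *\<^sub>R y \<in> {0..1}" by simp
  show "H ((1 - t) *\<^sub>R x + t *\<^sub>R y) \<le> (1 - t) * H x + t * H y"
    unfolding H_eq[of "(1 - t) *\<^sub>R x + t *\<^sub>R y"]
  proof (rule cSUP_least[OF Cne])
    fix h assume h: "h \<in> Cs"
    have "h ((1 - t) *\<^sub>R x + t *\<^sub>R y) \<le> (1 - t) * h x + t * h y"
      using h t xy by (intro convex_onD) (auto simp: Cs_def)
    also have "\<dots> \<le> (1 - t) * H x + t * H y"
      using Hup[OF h] xy t by (intro add_mono mult_left_mono) auto
    finally show "h ((1 - t) *\<^sub>R x + t *\<^sub>R y) \<le> (1 - t) * H x + t * H y" .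
  qed
qed

lemma H_in_C: "H \<in> Cs" using H_convex Hle by (simp add: Cs_def)

lemma H0: "H 0 = 0"
proof -
  have "H 0 \<le> Si (FF 0)" using Hle[of 0] by (simp add: F0)
  then have "H 0 \<le> 0" using Si_at[of 0] by (simp add: S0)
  moreover have "0 \<le> H 0" using Hup[OF wit0, of 0] by simp
  ultimately show ?thesis by simp
qed

lemma H1: "H 1 = SS K"
proof -
  have "H 1 \<le> SS K" using Hle[of 1] Si_at[of K] FK by simp
  moreover
  define M where "M = (\<Sum>k=0..K. \<bar>SS K - SS k\<bar>) / q K"
  have qK: "0 < q K" using qpos K1 by simp
  have M0: "0 \<le> M" using qK by (simp add: M_def)
  have "(\<lambda>t. (SS K - M) + M * t) \<in> Cs"
  proof (rule affine_in_C)
    fix k assume k: "k \<le> K"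
    show "SS K - M + M * FF k \<le> SS k"
    proof (cases "k = K")
      case True then show ?thesis using FK by simp
    next
      case False
      then have "FF k \<le> FF (K - 1)" using F_mono[of k "K - 1"] k by simp
      then have "q K \<le> 1 - FF k" using F_diff[of K] K1 FK by simp
      then have "M * q K \<le> M * (1 - FF k)" using M0 by (rule mult_left_mono)
      moreover have "M * q K = (\<Sum>k=0..K. \<bar>SS K - SS k\<bar>)" using qK by (simp add: M_def)
      moreover have "\<bar>SS K - SS k\<bar> \<le> (\<Sum>k=0..K. \<bar>SS K - SS k\<bar>)"
        using k by (intro member_le_sum) auto
      ultimately show ?thesis by (simp add: algebra_simps)
    qed
  qed
  then have "SS K \<le> H 1" using Hup[of _ 1] by fastforce
  ultimately show ?thesis by simp
qed


definition "hs k = H (FF k)"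

lemma F01: "k \<le> K \<Longrightarrow> 0 \<le> FF k \<and> FF k \<le> 1"
  using F_mono[of 0 k] F_mono[of k K] FK by (simp add: F0)

lemma oned_inst: "oned K w q hs \<alpha>"
proof
  show "1 \<le> K" by (rule K1)
  show "\<And>k. 1 \<le> k \<Longrightarrow> k \<le> K \<Longrightarrow> 0 < q k" by (rule qpos)
  show "\<And>k. 1 \<le> k \<Longrightarrow> k < K \<Longrightarrow> w k < w (Suc k)" using wlt by simp
  show "oF q K = 1" by (rule FK)
  show "hs 0 = 0" by (simp add: hs_def F0 H0)
  show "hs K = SS K" by (simp add: hs_def FK H1)
  show "\<And>k. k \<le> K \<Longrightarrow> hs k \<le> SS k"
    using Hle F01 Si_at by (fastforce simp: hs_def)
qed

lemma ivv_w: assumes "1 \<le> k" "k \<le> K" shows "ivv \<alpha> V f i (w k) = oned.phib q hs k"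
proof -
  have "FF k - FF (k - 1) = q k" using assms(1) by (rule F_diff)
  then show ?thesis using assms by (simp add: ivv_def vidx_w Fpt_eq oned.phib_def[OF oned_inst] hs_def)
qed

lemma phib_mono1:
  assumes k: "1 \<le> k" "k < K"
  shows "oned.phib q hs k \<le> oned.phib q hs (Suc k)"
proof -
  have q: "0 < q k" "0 < q (Suc k)" using qpos k by auto
  have "(hs k - hs (k - 1)) * (FF (Suc k) - FF k) \<le> (hs (Suc k) - hs k) * (FF k - FF (k - 1))"
    unfolding hs_def
    by (rule conv3[OF H_convex]) (use F01[of "k - 1"] F01[of "Suc k"] F_lt[of "k - 1" k] F_lt[of k "Suc k"] k in auto)
  then have "(hs k - hs (k - 1)) * q (Suc k) \<le> (hs (Suc k) - hs k) * q k"
    using F_diff[of k] F_diff[of "Suc k"] k by simp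
  then show ?thesis using q by (simp add: oned.phib_def[OF oned_inst] divide_simps mult.commute)
qed

lemma phib_mono:
  assumes "1 \<le> j" "j \<le> k" "k \<le> K"
  shows "oned.phib q hs j \<le> oned.phib q hs k"
  using assms
proof (induction k)
  case 0 then show ?case by simp
next
  case (Suc m)
  show ?case
  proof (cases "j = Suc m")
    case True then show ?thesis by simp
  next
    case False
    then have "oned.phib q hs j \<le> oned.phib q hs m" using Suc by simp
    moreover have "oned.phib q hs m \<le> oned.phib q hs (Suc m)" using phib_mono1[of m] Suc False by simp
    ultimately show ?thesis by simp
  qed
qed


lemma flat:
  assumes k: "1 \<le> k" "k < K" and lt: "hs k < SS k"
  shows "oned.phib q hs k = oned.phib q hs (Suc k)"
proof (rule ccontr)
  assume ne: "oned.phib q hs k \<noteq> oned.phib q hs (Suc k)"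
  define s where "s = oned.phib q hs k"
  define s' where "s' = oned.phib q hs (Suc k)"
  have "s \<le> s'" using phib_mono1[OF k] by (simp add: s_def s'_def)
  then have ss: "s < s'" using ne by (simp add: s_def s'_def)
  have q: "0 < q k" "0 < q (Suc k)" using qpos k by auto
  have hk: "hs k = hs (k - 1) + s * q k" using q by (simp add: s_def oned.phib_def[OF oned_inst])
  have hk': "hs (Suc k) = hs k + s' * q (Suc k)" using q by (simp add: s'_def oned.phib_def[OF oned_inst])
  have Fd: "FF k = FF (k - 1) + q k" "FF (Suc k) = FF k + q (Suc k)"
    using F_diff[of k] F_diff[of "Suc k"] k by auto
  define e where "e = (s' - s) / 2"
  have e0: "0 < e" using ss by (simp add: e_def)
  have s'e: "s' = s + 2 * e" unfolding e_def by (simp add: field_simps)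
  define \<delta> where "\<delta> = min (SS k - hs k) (e * min (q k) (q (Suc k)))"
  have d0: "0 < \<delta>" using lt e0 q by (simp add: \<delta>_def)
  have d1: "\<delta> \<le> SS k - hs k" by (simp add: \<delta>_def)
  have d2: "\<delta> \<le> e * q k" "\<delta> \<le> e * q (Suc k)"
  proof -
    have m1: "e * min (q k) (q (Suc k)) \<le> e * q k" using e0 by (intro mult_left_mono) auto
    have m2: "e * min (q k) (q (Suc k)) \<le> e * q (Suc k)" using e0 by (intro mult_left_mono) auto
    have "\<delta> \<le> e * min (q k) (q (Suc k))" by (simp add: \<delta>_def)
    then show "\<delta> \<le> e * q k" "\<delta> \<le> e * q (Suc k)" using m1 m2 by linarith+
  qed
  define c where "c = hs k + \<delta> - (s + e) * FF k"
  define g where "g t = max (H t) (c + (s + e) * t)" for t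
  have hle1: "hs (k - 1) \<le> SS (k - 1)" "hs (Suc k) \<le> SS (Suc k)"
    using oned.hle'[OF oned_inst] k by auto
  have Le1: "c + (s + e) * FF (k - 1) \<le> SS (k - 1)"
  proof -
    have "c + (s + e) * FF (k - 1) = hs (k - 1) + \<delta> - e * q k"
      unfolding c_def Fd(1) hk by (simp add: algebra_simps)
    then show ?thesis using d2 hle1 by linarith
  qed
  have Le2: "c + (s + e) * FF k \<le> SS k" using d1 by (simp add: c_def)
  have Le3: "c + (s + e) * FF (Suc k) \<le> SS (Suc k)"
  proof -
    have "c + (s + e) * FF (Suc k) = hs (Suc k) + \<delta> - e * q (Suc k)"
      unfolding c_def Fd(2) hk' s'e by (simp add: algebra_simps)
    then show ?thesis using d2 hle1 by linarith
  qed
  have gC: "g \<in> Cs"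
    unfolding Cs_def mem_Collect_eq
  proof
    show "convex_on {0..1} g" unfolding g_def by (intro convex_on_max2 H_convex convex_on_affine)
    show "\<forall>t\<in>{0..1}. g t \<le> Si t"
    proof
      fix t :: real assume t: "t \<in> {0..1}"
      show "g t \<le> Si t"
      proof (cases "c + (s + e) * t \<le> H t")
        case True then show ?thesis using Hle[OF t] by (simp add: g_def)
      next
        case False
        have "c + (s + e) * t \<le> Si t"
        proof (cases "t < FF (k - 1)")
          case True
          have "(hs (k - 1) - H t) * (FF k - FF (k - 1)) \<le> (hs k - hs (k - 1)) * (FF (k - 1) - t)"
            unfolding hs_def
            by (rule conv3[OF H_convex]) (use t True F_lt[of "k - 1" k] F01[of k] k in auto)
          then have "(hs (k - 1) - H t) * q k \<le> (s * (FF (k - 1) - t)) * q k"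
            using hk Fd by (simp add: algebra_simps)
          then have A: "hs (k - 1) - H t \<le> s * (FF (k - 1) - t)" using q by simp
          have B: "e * (t - FF (k - 1)) \<le> 0" using e0 True by (simp add: mult_nonneg_nonpos)
          have "c + (s + e) * t = hs (k - 1) + \<delta> - e * q k + s * (t - FF (k - 1)) + e * (t - FF (k - 1))"
            unfolding c_def Fd(1) hk by (simp add: algebra_simps)
          then have "c + (s + e) * t \<le> H t" using A B d2 by (simp add: algebra_simps)
          then show ?thesis using False by simp
        next
          case c1: False
          show ?thesis
          proof (cases "t \<le> FF k")
            case True
            then show ?thesis using affine_le_Si[of k t c "s + e"] k c1 Le1 Le2 by simp
          next
            case c2: False
            show ?thesis
            proof (cases "t \<le> FF (Suc k)")
              case True
              then show ?thesis using affine_le_Si[of "Suc k" t c "s + e"] k c2 Le2 Le3 by simp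
            next
              case c3: False
              have "(hs (Suc k) - hs k) * (t - FF (Suc k)) \<le> (H t - hs (Suc k)) * (FF (Suc k) - FF k)"
                unfolding hs_def
                by (rule conv3[OF H_convex]) (use t c3 F_lt[of k "Suc k"] F01[of k] k in auto)
              then have "(s' * (t - FF (Suc k))) * q (Suc k) \<le> (H t - hs (Suc k)) * q (Suc k)"
                using hk' Fd by (simp add: algebra_simps)
              then have A: "s' * (t - FF (Suc k)) \<le> H t - hs (Suc k)" using q by simp
              have B: "0 \<le> e * (t - FF (Suc k))" using e0 c3 by simp
              have "c + (s + e) * t = hs (Suc k) + \<delta> - e * q (Suc k) + s' * (t - FF (Suc k)) - e * (t - FF (Suc k))"
                unfolding c_def Fd(2) hk' s'e by (simp add: algebra_simps)
              then have "c + (s + e) * t \<le> H t" using A B d2 by (simp add: algebra_simps)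
              then show ?thesis using False by simp
            qed
          qed
        qed
        then show ?thesis using False by (simp add: g_def)
      qed
    qed
  qed
  have "g (FF k) \<le> H (FF k)" using Hup[OF gC] F01[of k] k by simp
  moreover have "c + (s + e) * FF k = hs k + \<delta>" by (simp add: c_def)
  ultimately have "hs k + \<delta> \<le> hs k" unfolding g_def hs_def by simp
  then show False using d0 by simp
qed

end

lemma PiE_split_sum:
  fixes V :: "'n::finite \<Rightarrow> 'b set" and Q :: "('n \<Rightarrow> 'b) \<Rightarrow> real"
  shows "(\<Sum>v\<in>PiE UNIV V. Q v) = (\<Sum>x\<in>V i. \<Sum>w\<in>PiE (UNIV - {i}) V. Q (w(i := x)))"
proof -
  have U: "UNIV = insert i (UNIV - {i})" by auto
  have "PiE UNIV V = (\<lambda>(y, g). g(i := y)) ` (V i \<times> PiE (UNIV - {i}) V)"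
    by (subst U, rule PiE_insert_eq)
  moreover have "inj_on (\<lambda>(y, g). g(i := y)) (V i \<times> PiE (UNIV - {i}) V)"
    by (rule inj_combinator) simp
  ultimately have "(\<Sum>v\<in>PiE UNIV V. Q v) = sum (Q \<circ> (\<lambda>(y, g). g(i := y))) (V i \<times> PiE (UNIV - {i}) V)"
    by (simp only: sum.reindex)
  also have "\<dots> = (\<Sum>(y, g)\<in>V i \<times> PiE (UNIV - {i}) V. Q (g(i := y)))"
    by (intro sum.cong) auto
  also have "\<dots> = (\<Sum>x\<in>V i. \<Sum>w\<in>PiE (UNIV - {i}) V. Q (w(i := x)))"
    by (simp add: sum.cartesian_product)
  finally show ?thesis .
qed

lemma prob_split:
  fixes f :: "'n::finite \<Rightarrow> real \<Rightarrow> real"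
  shows "prof_prob f (w(i := x)) = f i x * (\<Prod>j\<in>UNIV - {i}. f j (w j))"
proof -
  have "prof_prob f (w(i := x)) = f i x * (\<Prod>j\<in>UNIV - {i}. f j ((w(i := x)) j))"
    unfolding prof_prob_def by (subst prod.remove[of UNIV i]) auto
  also have "(\<Prod>j\<in>UNIV - {i}. f j ((w(i := x)) j)) = (\<Prod>j\<in>UNIV - {i}. f j (w j))"
    by (intro prod.cong) auto
  finally show ?thesis .
qed

lemma decomp:
  fixes V :: "'n::finite \<Rightarrow> real set" and f :: "'n \<Rightarrow> real \<Rightarrow> real"
  shows "(\<Sum>v\<in>PiE UNIV V. prof_prob f v * Q v)
     = (\<Sum>x\<in>V i. f i x * (\<Sum>w\<in>PiE (UNIV - {i}) V. (\<Prod>j\<in>UNIV - {i}. f j (w j)) * Q (w(i := x))))"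
  unfolding PiE_split_sum[where V=V and i=i] prob_split
  by (simp add: sum_distrib_left mult.assoc)

lemma decomp2:
  fixes V :: "'n::finite \<Rightarrow> real set" and f :: "'n \<Rightarrow> real \<Rightarrow> real"
  assumes "finite (V i)"
  shows "(\<Sum>v\<in>PiE UNIV V. prof_prob f v * Q v)
     = (\<Sum>w\<in>PiE (UNIV - {i}) V. (\<Prod>j\<in>UNIV - {i}. f j (w j)) * (\<Sum>x\<in>V i. f i x * Q (w(i := x))))"
  unfolding decomp[where V=V and f=f and Q=Q and i=i] sum_distrib_left
  by (subst sum.swap) (simp add: algebra_simps)

locale setting =
  fixes V :: "'n::finite \<Rightarrow> real set" and f :: "'n \<Rightarrow> real \<Rightarrow> real" and \<alpha> :: real
  assumes V_fin: "\<forall>i. finite (V i) \<and> V i \<noteq> {} \<and> V i \<subseteq> {0..}"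
    and f_pmf: "\<forall>i. (\<forall>x\<in>V i. 0 < f i x) \<and> (\<Sum>x\<in>V i. f i x) = 1"
    and a01: "0 \<le> \<alpha>" "\<alpha> \<le> 1"
begin

lemma bidder_i: "bidder V f i"
  using V_fin f_pmf by unfold_locales auto

definition "PHI v = (\<lambda>j. ivv \<alpha> V f j (v j))"

lemma prob_nonneg: "v \<in> PiE UNIV V \<Longrightarrow> 0 \<le> prof_prob f v"
  unfolding prof_prob_def using f_pmf by (intro prod_nonneg) (auto simp: PiE_iff less_imp_le)

lemma wprob_nonneg: "w \<in> PiE (UNIV - {i}) V \<Longrightarrow> 0 \<le> (\<Prod>j\<in>UNIV - {i}. f j (w j))"
  using f_pmf by (intro prod_nonneg) (auto simp: PiE_iff less_imp_le)

lemma Obj_split: "Obj \<alpha> V f a p = (\<Sum>i\<in>UNIV. \<Sum>v\<in>PiE UNIV V. prof_prob f v * (\<alpha> * p v i + (1 - \<alpha>) * (a v i * v i)))"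
proof -
  have "Obj \<alpha> V f a p = (\<Sum>v\<in>PiE UNIV V. \<Sum>i\<in>UNIV. prof_prob f v * (\<alpha> * p v i + (1 - \<alpha>) * (a v i * v i)))"
    unfolding Obj_def Rev_def SW_def by (simp add: sum_distrib_left sum.distrib algebra_simps sum_subtractf)
  then show ?thesis by (simp add: sum.swap[of _ "PiE UNIV V"])
qed

lemma upd_PiE: "w \<in> PiE (UNIV - {i}) V \<Longrightarrow> x \<in> V i \<Longrightarrow> w(i := x) \<in> PiE UNIV V"
  by (auto simp: PiE_iff)


lemma decomp_interim:
  "(\<Sum>v\<in>PiE UNIV V. prof_prob f v * (\<alpha> * p v i + (1 - \<alpha>) * (a v i * v i)))
   = (\<Sum>x\<in>V i. f i x * (\<alpha> * interim V f p i x + (1 - \<alpha>) * (x * interim V f a i x)))"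
  unfolding decomp[where i=i] interim_def
  by (intro sum.cong refl) (simp add: sum_distrib_left sum.distrib algebra_simps sum_subtractf)

lemma decomp_interim2:
  "(\<Sum>v\<in>PiE UNIV V. prof_prob f v * (g (v i) * a v i))
   = (\<Sum>x\<in>V i. f i x * (g x * interim V f a i x))"
  unfolding decomp[where i=i] interim_def
  by (intro sum.cong refl) (simp add: sum_distrib_left algebra_simps)

lemma bic_i:
  assumes bic: "BIC V f a p"
  shows "(\<Sum>v\<in>PiE UNIV V. prof_prob f v * (\<alpha> * p v i + (1 - \<alpha>) * (a v i * v i)))
       \<le> (\<Sum>v\<in>PiE UNIV V. prof_prob f v * (ivv \<alpha> V f i (v i) * a v i))"
proof -
  interpret B: bidder V f i \<alpha> by (rule bidder_i)
  interpret O: oned B.K B.w B.q "B.hs" \<alpha> by (rule B.oned_inst)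
  define A where "A k = interim V f a i (B.w k)" for k
  define P where "P k = interim V f p i (B.w k)" for k
  have "(\<Sum>v\<in>PiE UNIV V. prof_prob f v * (\<alpha> * p v i + (1 - \<alpha>) * (a v i * v i)))
     = (\<Sum>k=1..B.K. B.q k * (\<alpha> * P k + (1 - \<alpha>) * (B.w k * A k)))"
    unfolding decomp_interim B.sum_V A_def P_def ..
  also have "\<dots> = \<alpha> * (\<Sum>k=1..B.K. B.q k * P k) + (1 - \<alpha>) * (\<Sum>k=1..B.K. B.q k * B.w k * A k)"
    by (simp add: sum_distrib_left sum.distrib algebra_simps sum_subtractf)
  also have "\<dots> \<le> (\<Sum>k=1..B.K. B.q k * O.phib k * A k)"
  proof (rule O.bic_bound)
    show "0 \<le> \<alpha>" by (rule a01)
    show "0 \<le> B.w 1 * A 1 - P 1"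
      using bic B.wmem[of 1] B.K1 unfolding BIC_def A_def P_def by (auto simp: mult.commute)
    show "B.w k * A j - P j \<le> B.w k * A k - P k"
      if "1 \<le> j" "j \<le> B.K" "1 \<le> k" "k \<le> B.K" for j k
      using bic B.wmem[of j] B.wmem[of k] that unfolding BIC_def A_def P_def by (auto simp: mult.commute)
  qed
  also have "\<dots> = (\<Sum>k=1..B.K. B.q k * (ivv \<alpha> V f i (B.w k) * A k))"
    by (intro sum.cong refl) (simp add: B.ivv_w)
  also have "\<dots> = (\<Sum>v\<in>PiE UNIV V. prof_prob f v * (ivv \<alpha> V f i (v i) * a v i))"
    unfolding decomp_interim2 B.sum_V A_def ..
  finally show ?thesis .
qed


lemma M_i:
  fixes sel :: "('n \<Rightarrow> real) \<Rightarrow> real^'n"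
  defines "a \<equiv> (\<lambda>v i. sel (\<lambda>j. ivv \<alpha> V f j (v j)) $ i)"
  shows "(\<Sum>v\<in>PiE UNIV V. prof_prob f v * (\<alpha> * pay_formula V a v i + (1 - \<alpha>) * (a v i * v i)))
       = (\<Sum>v\<in>PiE UNIV V. prof_prob f v * (ivv \<alpha> V f i (v i) * a v i))"
proof -
  interpret B: bidder V f i \<alpha> by (rule bidder_i)
  interpret O: oned B.K B.w B.q "B.hs" \<alpha> by (rule B.oned_inst)
  have fin: "finite (V i)" by (rule B.fin)
  have inner: "(\<Sum>x\<in>V i. f i x * (\<alpha> * pay_formula V a (w(i := x)) i + (1 - \<alpha>) * (a (w(i := x)) i * (w(i := x)) i)))
       = (\<Sum>x\<in>V i. f i x * (ivv \<alpha> V f i ((w(i := x)) i) * a (w(i := x)) i))" for w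
  proof -
    define ak where "ak k = a (w(i := B.w k)) i" for k
    have pay: "pay_formula V a (w(i := B.w k)) i = B.w k * ak k - (\<Sum>l\<in>{1..<k}. (B.w (l + 1) - B.w l) * ak l)"
      if "1 \<le> k" "k \<le> B.K" for k
      using that by (simp add: pay_formula_def B.vidx_w ak_def Let_def)
    have flat: "ak k = ak (Suc k)" if k: "1 \<le> k" "k < B.K" "B.hs k < B.SS k" for k
    proof -
      have "ivv \<alpha> V f i (B.w k) = ivv \<alpha> V f i (B.w (Suc k))"
        using B.flat[OF k] B.ivv_w[of k] B.ivv_w[of "Suc k"] k by simp
      then have "(\<lambda>j. ivv \<alpha> V f j ((w(i := B.w k)) j)) = (\<lambda>j. ivv \<alpha> V f j ((w(i := B.w (Suc k))) j))"
        by (intro ext) auto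
      then show ?thesis by (simp add: ak_def a_def)
    qed
    have "(\<Sum>x\<in>V i. f i x * (\<alpha> * pay_formula V a (w(i := x)) i + (1 - \<alpha>) * (a (w(i := x)) i * (w(i := x)) i)))
       = (\<Sum>k=1..B.K. B.q k * (\<alpha> * (B.w k * ak k - (\<Sum>l\<in>{1..<k}. (B.w (Suc l) - B.w l) * ak l)) + (1 - \<alpha>) * (ak k * B.w k)))"
      unfolding B.sum_V by (intro sum.cong refl) (simp add: pay ak_def)
    also have "\<dots> = \<alpha> * (\<Sum>k=1..B.K. B.q k * (B.w k * ak k - (\<Sum>l\<in>{1..<k}. (B.w (Suc l) - B.w l) * ak l)))
        + (1 - \<alpha>) * (\<Sum>k=1..B.K. B.q k * B.w k * ak k)"
      by (simp add: sum_distrib_left sum.distrib algebra_simps sum_subtractf)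
    also have "\<dots> = (\<Sum>k=1..B.K. B.q k * O.phib k * ak k)"
      by (rule O.mech_M) (use flat in auto)
    also have "\<dots> = (\<Sum>x\<in>V i. f i x * (ivv \<alpha> V f i ((w(i := x)) i) * a (w(i := x)) i))"
      unfolding B.sum_V by (intro sum.cong refl) (simp add: B.ivv_w ak_def)
    finally show "(\<Sum>x\<in>V i. f i x * (\<alpha> * pay_formula V a (w(i := x)) i + (1 - \<alpha>) * (a (w(i := x)) i * (w(i := x)) i)))
       = (\<Sum>x\<in>V i. f i x * (ivv \<alpha> V f i ((w(i := x)) i) * a (w(i := x)) i))" .
  qed
  show ?thesis
    unfolding decomp2[where V=V and i=i, OF fin] inner ..
qed


lemma sum_diff_single:
  fixes \<phi> \<phi>' :: "'n \<Rightarrow> real" and y :: "real^'n"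
  assumes "\<And>j. j \<noteq> i \<Longrightarrow> \<phi>' j = \<phi> j"
  shows "(\<Sum>j\<in>UNIV. \<phi>' j * y $ j) - (\<Sum>j\<in>UNIV. \<phi> j * y $ j) = (\<phi>' i - \<phi> i) * y $ i"
proof -
  have "(\<Sum>j\<in>UNIV. \<phi>' j * y $ j) - (\<Sum>j\<in>UNIV. \<phi> j * y $ j) = (\<Sum>j\<in>UNIV. (\<phi>' j - \<phi> j) * y $ j)"
    by (simp add: sum_subtractf left_diff_distrib)
  also have "\<dots> = (\<phi>' i - \<phi> i) * y $ i + (\<Sum>j\<in>UNIV - {i}. (\<phi>' j - \<phi> j) * y $ j)"
    by (subst sum.remove[of UNIV i]) auto
  also have "(\<Sum>j\<in>UNIV - {i}. (\<phi>' j - \<phi> j) * y $ j) = 0"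
    using assms by (intro sum.neutral) auto
  finally show ?thesis by simp
qed

lemma DSIC_BIC: assumes "DSIC V a p" shows "BIC V f a p"
  unfolding BIC_def
proof (intro allI ballI conjI)
  fix i x assume x: "x \<in> V i"
  have eq: "interim V f a i b * x - interim V f p i b
      = (\<Sum>w\<in>PiE (UNIV - {i}) V. (\<Prod>j\<in>UNIV - {i}. f j (w j)) * (a (w(i := b)) i * x - p (w(i := b)) i))" for b
    by (simp add: interim_def sum_distrib_right sum_distrib_left sum_subtractf algebra_simps)
  show "0 \<le> interim V f a i x * x - interim V f p i x"
    unfolding eq
  proof (intro sum_nonneg mult_nonneg_nonneg wprob_nonneg)
    fix w assume w: "w \<in> PiE (UNIV - {i}) V"
    have "0 \<le> a (w(i := x)) i * (w(i := x)) i - p (w(i := x)) i"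
      using assms upd_PiE[OF w x] unfolding DSIC_def by blast
    then show "0 \<le> a (w(i := x)) i * x - p (w(i := x)) i" by simp
  qed
  fix b assume b: "b \<in> V i"
  show "interim V f a i b * x - interim V f p i b \<le> interim V f a i x * x - interim V f p i x"
    unfolding eq
  proof (intro sum_mono mult_left_mono wprob_nonneg)
    fix w assume w: "w \<in> PiE (UNIV - {i}) V"
    have "a ((w(i := x))(i := b)) i * (w(i := x)) i - p ((w(i := x))(i := b)) i
        \<le> a (w(i := x)) i * (w(i := x)) i - p (w(i := x)) i"
      using assms upd_PiE[OF w x] b unfolding DSIC_def by blast
    then show "a (w(i := b)) i * x - p (w(i := b)) i \<le> a (w(i := x)) i * x - p (w(i := x)) i" by simp
  qed
qed

lemma obj_BIC_bound:
  assumes "BIC V f a p"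
  shows "Obj \<alpha> V f a p \<le> (\<Sum>v\<in>PiE UNIV V. prof_prob f v * (\<Sum>i\<in>UNIV. ivv \<alpha> V f i (v i) * a v i))"
proof -
  have "Obj \<alpha> V f a p \<le> (\<Sum>i\<in>UNIV. \<Sum>v\<in>PiE UNIV V. prof_prob f v * (ivv \<alpha> V f i (v i) * a v i))"
    unfolding Obj_split by (intro sum_mono bic_i[OF assms])
  also have "\<dots> = (\<Sum>v\<in>PiE UNIV V. prof_prob f v * (\<Sum>i\<in>UNIV. ivv \<alpha> V f i (v i) * a v i))"
    by (simp add: sum_distrib_left sum.swap[of _ UNIV])
  finally show ?thesis .
qed

lemma obj_M:
  fixes sel :: "('n \<Rightarrow> real) \<Rightarrow> real^'n"
  defines "a \<equiv> (\<lambda>v i. sel (\<lambda>j. ivv \<alpha> V f j (v j)) $ i)"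
  shows "Obj \<alpha> V f a (pay_formula V a) = (\<Sum>v\<in>PiE UNIV V. prof_prob f v * (\<Sum>i\<in>UNIV. ivv \<alpha> V f i (v i) * a v i))"
proof -
  have "Obj \<alpha> V f a (pay_formula V a) = (\<Sum>i\<in>UNIV. \<Sum>v\<in>PiE UNIV V. prof_prob f v * (ivv \<alpha> V f i (v i) * a v i))"
    unfolding Obj_split a_def by (intro sum.cong refl M_i)
  also have "\<dots> = (\<Sum>v\<in>PiE UNIV V. prof_prob f v * (\<Sum>i\<in>UNIV. ivv \<alpha> V f i (v i) * a v i))"
    by (simp add: sum_distrib_left sum.swap[of _ UNIV])
  finally show ?thesis .
qed

lemma feasible_bound:
  fixes sel :: "('n \<Rightarrow> real) \<Rightarrow> real^'n"
  assumes selP: "\<forall>v\<in>PiE UNIV V. sel (\<lambda>j. ivv \<alpha> V f j (v j)) \<in> A \<and>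
             (\<forall>x\<in>A. (\<Sum>i\<in>UNIV. ivv \<alpha> V f i (v i) * x $ i)
                     \<le> (\<Sum>i\<in>UNIV. ivv \<alpha> V f i (v i) * sel (\<lambda>j. ivv \<alpha> V f j (v j)) $ i))"
    and feas: "feasible A V a'"
  shows "(\<Sum>v\<in>PiE UNIV V. prof_prob f v * (\<Sum>i\<in>UNIV. ivv \<alpha> V f i (v i) * a' v i))
      \<le> (\<Sum>v\<in>PiE UNIV V. prof_prob f v * (\<Sum>i\<in>UNIV. ivv \<alpha> V f i (v i) * sel (\<lambda>j. ivv \<alpha> V f j (v j)) $ i))"
proof (rule sum_mono)
  fix v assume v: "v \<in> PiE UNIV V"
  have "(\<chi> i. a' v i) \<in> A" using feas v by (simp add: feasible_def)
  then have "(\<Sum>i\<in>UNIV. ivv \<alpha> V f i (v i) * a' v i)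
      \<le> (\<Sum>i\<in>UNIV. ivv \<alpha> V f i (v i) * sel (\<lambda>j. ivv \<alpha> V f j (v j)) $ i)"
    using selP v by fastforce
  then show "prof_prob f v * (\<Sum>i\<in>UNIV. ivv \<alpha> V f i (v i) * a' v i)
      \<le> prof_prob f v * (\<Sum>i\<in>UNIV. ivv \<alpha> V f i (v i) * sel (\<lambda>j. ivv \<alpha> V f j (v j)) $ i)"
    using prob_nonneg[OF v] by (rule mult_left_mono)
qed


lemma DSIC_M:
  fixes sel :: "('n \<Rightarrow> real) \<Rightarrow> real^'n" and A :: "(real^'n) set"
  defines "a \<equiv> (\<lambda>v i. sel (\<lambda>j. ivv \<alpha> V f j (v j)) $ i)"
  assumes A_nonneg: "A \<subseteq> {x. \<forall>i. 0 \<le> x $ i}"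
    and selP: "\<forall>v\<in>PiE UNIV V. sel (\<lambda>j. ivv \<alpha> V f j (v j)) \<in> A \<and>
             (\<forall>x\<in>A. (\<Sum>i\<in>UNIV. ivv \<alpha> V f i (v i) * x $ i)
                     \<le> (\<Sum>i\<in>UNIV. ivv \<alpha> V f i (v i) * sel (\<lambda>j. ivv \<alpha> V f j (v j)) $ i))"
  shows "DSIC V a (pay_formula V a)"
  unfolding DSIC_def
proof (intro allI ballI conjI)
  fix i v assume v: "v \<in> PiE UNIV V"
  interpret B: bidder V f i \<alpha> by (rule bidder_i)
  have viV: "v i \<in> V i" using v by (auto simp: PiE_iff)
  define k where "k = vidx V i (v i)"
  have k: "1 \<le> k" "k \<le> B.K" "B.w k = v i" using B.vidx_mem[OF viV] by (auto simp: k_def)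
  define ak where "ak l = a (v(i := B.w l)) i" for l
  have vl: "v(i := B.w l) \<in> PiE UNIV V" if "1 \<le> l" "l \<le> B.K" for l
    using v B.wmem[OF that] by (auto simp: PiE_iff)
  have nonneg: "0 \<le> ak l" if "1 \<le> l" "l \<le> B.K" for l
    using selP vl[OF that] A_nonneg by (force simp: ak_def a_def)
  have mono: "ak l \<le> ak l'" if l: "1 \<le> l" "l \<le> l'" "l' \<le> B.K" for l l'
  proof -
    define \<phi> where "\<phi> = (\<lambda>j. ivv \<alpha> V f j ((v(i := B.w l)) j))"
    define \<phi>' where "\<phi>' = (\<lambda>j. ivv \<alpha> V f j ((v(i := B.w l')) j))"
    have same: "\<And>j. j \<noteq> i \<Longrightarrow> \<phi>' j = \<phi> j" by (simp add: \<phi>_def \<phi>'_def)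
    have le: "\<phi> i \<le> \<phi>' i"
      using B.phib_mono[OF l] B.ivv_w[of l] B.ivv_w[of l'] l by (simp add: \<phi>_def \<phi>'_def)
    show ?thesis
    proof (cases "\<phi> i = \<phi>' i")
      case True
      then have "\<phi> = \<phi>'" using same by (intro ext) (metis)
      then show ?thesis by (simp add: ak_def a_def \<phi>_def \<phi>'_def)
    next
      case False
      then have lt: "\<phi> i < \<phi>' i" using le by simp
      have P1: "sel \<phi> \<in> A" "\<forall>x\<in>A. (\<Sum>j\<in>UNIV. \<phi> j * x $ j) \<le> (\<Sum>j\<in>UNIV. \<phi> j * sel \<phi> $ j)"
        using selP vl[of l] l unfolding \<phi>_def by auto
      have P2: "sel \<phi>' \<in> A" "\<forall>x\<in>A. (\<Sum>j\<in>UNIV. \<phi>' j * x $ j) \<le> (\<Sum>j\<in>UNIV. \<phi>' j * sel \<phi>' $ j)"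
        using selP vl[of l'] l unfolding \<phi>'_def by auto
      have 1: "(\<Sum>j\<in>UNIV. \<phi> j * sel \<phi>' $ j) \<le> (\<Sum>j\<in>UNIV. \<phi> j * sel \<phi> $ j)" using P1 P2 by blast
      have 2: "(\<Sum>j\<in>UNIV. \<phi>' j * sel \<phi> $ j) \<le> (\<Sum>j\<in>UNIV. \<phi>' j * sel \<phi>' $ j)" using P1 P2 by blast
      have d1: "(\<Sum>j\<in>UNIV. \<phi>' j * sel \<phi> $ j) - (\<Sum>j\<in>UNIV. \<phi> j * sel \<phi> $ j) = (\<phi>' i - \<phi> i) * sel \<phi> $ i"
        by (rule sum_diff_single[OF same])
      have d2: "(\<Sum>j\<in>UNIV. \<phi>' j * sel \<phi>' $ j) - (\<Sum>j\<in>UNIV. \<phi> j * sel \<phi>' $ j) = (\<phi>' i - \<phi> i) * sel \<phi>' $ i"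
        by (rule sum_diff_single[OF same])
      have "(\<phi>' i - \<phi> i) * sel \<phi> $ i \<le> (\<phi>' i - \<phi> i) * sel \<phi>' $ i" using 1 2 d1 d2 by linarith
      then have "sel \<phi> $ i \<le> sel \<phi>' $ i" using lt by simp
      then show ?thesis by (simp add: ak_def a_def \<phi>_def \<phi>'_def)
    qed
  qed
  have pay: "pay_formula V a (v(i := B.w j)) i = B.w j * ak j - (\<Sum>l\<in>{1..<j}. (B.w (Suc l) - B.w l) * ak l)"
    if "1 \<le> j" "j \<le> B.K" for j
    using that by (simp add: pay_formula_def B.vidx_w ak_def Let_def)
  have vk: "v(i := B.w k) = v" using k by auto
  have util: "a v i * v i - pay_formula V a v i = (\<Sum>l\<in>{1..<k}. (B.w (Suc l) - B.w l) * ak l)"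
    using pay[OF k(1,2)] k(3) unfolding vk by (simp add: ak_def vk)
  have dpos: "0 \<le> B.w (Suc l) - B.w l" if "1 \<le> l" "l < B.K" for l
    using B.wlt[of l "Suc l"] that by simp
  show "0 \<le> a v i * v i - pay_formula V a v i"
    unfolding util using dpos nonneg k by (intro sum_nonneg mult_nonneg_nonneg) auto
  fix b assume b: "b \<in> V i"
  define j where "j = vidx V i b"
  have j: "1 \<le> j" "j \<le> B.K" "B.w j = b" using B.vidx_mem[OF b] by (auto simp: j_def)
  have dev: "a (v(i := b)) i * v i - pay_formula V a (v(i := b)) i
      = ak j * (B.w k - B.w j) + (\<Sum>l\<in>{1..<j}. (B.w (Suc l) - B.w l) * ak l)"
    using pay[OF j(1,2)] j(3) k(3) by (simp add: ak_def algebra_simps)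
  have wst: "B.w l \<le> B.w (Suc l)" if "1 \<le> l" "l < B.K" for l using dpos[OF that] by simp
  show "a (v(i := b)) i * v i - pay_formula V a (v(i := b)) i \<le> a v i * v i - pay_formula V a v i"
    unfolding dev util
  proof (cases "j \<le> k")
    case True
    have split: "(\<Sum>l\<in>{1..<k}. (B.w (Suc l) - B.w l) * ak l)
        = (\<Sum>l\<in>{1..<j}. (B.w (Suc l) - B.w l) * ak l) + (\<Sum>l\<in>{j..<k}. (B.w (Suc l) - B.w l) * ak l)"
      using True j by (simp add: sum.atLeastLessThan_concat)
    have "ak j * (B.w k - B.w j) \<le> (\<Sum>l\<in>{j..<k}. (B.w (Suc l) - B.w l) * ak l)"
      by (rule tele_mono(1)) (use True j k mono wst in auto)
    then show "ak j * (B.w k - B.w j) + (\<Sum>l\<in>{1..<j}. (B.w (Suc l) - B.w l) * ak l)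
        \<le> (\<Sum>l\<in>{1..<k}. (B.w (Suc l) - B.w l) * ak l)" unfolding split by simp
  next
    case False
    have split: "(\<Sum>l\<in>{1..<j}. (B.w (Suc l) - B.w l) * ak l)
        = (\<Sum>l\<in>{1..<k}. (B.w (Suc l) - B.w l) * ak l) + (\<Sum>l\<in>{k..<j}. (B.w (Suc l) - B.w l) * ak l)"
      using False k by (simp add: sum.atLeastLessThan_concat)
    have "(\<Sum>l\<in>{k..<j}. (B.w (Suc l) - B.w l) * ak l) \<le> ak j * (B.w j - B.w k)"
      by (rule tele_mono(2)) (use False j k mono wst in auto)
    then show "ak j * (B.w k - B.w j) + (\<Sum>l\<in>{1..<j}. (B.w (Suc l) - B.w l) * ak l)
        \<le> (\<Sum>l\<in>{1..<k}. (B.w (Suc l) - B.w l) * ak l)" unfolding split by (simp add: algebra_simps)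
  qed
qed

end

lemma rat_denom: assumes "(x::real) \<in> \<rat>" shows "\<exists>d::int. d > 0 \<and> of_int d * x \<in> \<int>"
proof -
  obtain a b where ab: "b > 0" "x = of_int a / of_int b" using Rats_cases'[OF assms] by metis
  then show ?thesis by (intro exI[of _ b]) auto
qed

lemma common_denom:
  fixes g :: "'n::finite \<Rightarrow> real"
  assumes "\<forall>i. g i \<in> \<rat>"
  shows "\<exists>D::int. D > 0 \<and> (\<forall>i. of_int D * g i \<in> \<int>)"
proof -
  have "\<forall>i. \<exists>d::int. d > 0 \<and> of_int d * g i \<in> \<int>" using assms rat_denom by blast
  then obtain dd where dd: "\<And>i. dd i > 0 \<and> of_int (dd i) * g i \<in> \<int>" by metis
  define D where "D = (\<Prod>i\<in>UNIV. dd i)"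
  have "D > 0" unfolding D_def using dd by (intro prod_pos) auto
  moreover have "of_int D * g i \<in> \<int>" for i
  proof -
    have "D = dd i * (\<Prod>j\<in>UNIV - {i}. dd j)" unfolding D_def by (subst prod.remove[of UNIV i]) auto
    then have "of_int D * g i = of_int (\<Prod>j\<in>UNIV - {i}. dd j) * (of_int (dd i) * g i)"
      by (simp add: algebra_simps)
    moreover have "of_int (\<Prod>j\<in>UNIV - {i}. dd j) * (of_int (dd i) * g i) \<in> \<int>"
      by (rule Ints_mult) (use dd[of i] in auto)
    ultimately show ?thesis by metis
  qed
  ultimately show ?thesis by blast
qed

lemma span_coeffs:
  fixes r :: "nat \<Rightarrow> real^'n"
  assumes "finite T" "x \<in> span (r ` T)"
  shows "\<exists>c. x = (\<Sum>j\<in>T. c j *\<^sub>R r j)"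
  using assms(2)
proof (induction rule: span_induct)
  case base
  show ?case unfolding subspace_def
  proof (intro conjI ballI allI)
    show "0 \<in> Collect (\<lambda>x. \<exists>c. x = (\<Sum>j\<in>T. c j *\<^sub>R r j))" by (auto intro: exI[of _ "\<lambda>_. 0"])
    fix x y assume "x \<in> Collect (\<lambda>x. \<exists>c. x = (\<Sum>j\<in>T. c j *\<^sub>R r j))" "y \<in> Collect (\<lambda>x. \<exists>c. x = (\<Sum>j\<in>T. c j *\<^sub>R r j))"
    then obtain c1 c2 where "x = (\<Sum>j\<in>T. c1 j *\<^sub>R r j)" "y = (\<Sum>j\<in>T. c2 j *\<^sub>R r j)" by auto
    then have "x + y = (\<Sum>j\<in>T. (c1 j + c2 j) *\<^sub>R r j)" by (simp add: sum.distrib scaleR_add_left)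
    then show "x + y \<in> Collect (\<lambda>x. \<exists>c. x = (\<Sum>j\<in>T. c j *\<^sub>R r j))"
      unfolding mem_Collect_eq by (rule exI[of _ "\<lambda>j. c1 j + c2 j"])
  next
    fix a :: real and x assume "x \<in> Collect (\<lambda>x. \<exists>c. x = (\<Sum>j\<in>T. c j *\<^sub>R r j))"
    then obtain c1 where "x = (\<Sum>j\<in>T. c1 j *\<^sub>R r j)" by auto
    then have "a *\<^sub>R x = (\<Sum>j\<in>T. (a * c1 j) *\<^sub>R r j)" by (simp add: scaleR_sum_right)
    then show "a *\<^sub>R x \<in> Collect (\<lambda>x. \<exists>c. x = (\<Sum>j\<in>T. c j *\<^sub>R r j))"
      unfolding mem_Collect_eq by (rule exI[of _ "\<lambda>j. a * c1 j"])
  qed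
next
  case (step x)
  then obtain j where j: "j \<in> T" "x = r j" by auto
  have "x = (\<Sum>j'\<in>T. (if j' = j then 1 else 0) *\<^sub>R r j')"
    using j assms(1) by (simp add: if_distrib[of "\<lambda>c. c *\<^sub>R _"] sum.delta cong: if_cong)
  then show ?case by (rule exI[of _ "\<lambda>j'. if j' = j then 1 else 0"])
qed

lemma vec_self_neg: "(a::real^'n) - c = a + c \<Longrightarrow> c = 0"
proof -
  assume h: "a - c = a + c"
  have "(a + c) - (a - c) = c + c" by simp
  then have cc: "c + c = 0" using h by simp
  have "(c + c) $ i = 0 $ i" for i using cc by (rule arg_cong)
  then have "c $ i = 0" for i by simp
  then show "c = 0" by (simp add: vec_eq_iff)
qed

lemma inner_row: "(\<chi> i. G j i) \<bullet> (x::real^'n) = (\<Sum>i\<in>UNIV. G j i * x $ i)"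
  by (simp add: inner_vec_def)


lemma tdi_max:
  fixes G :: "nat \<Rightarrow> 'n::finite \<Rightarrow> real" and b :: "nat \<Rightarrow> real" and A :: "(real^'n) set"
    and \<phi> :: "'n \<Rightarrow> real"
  assumes Grat: "\<forall>j<m'. \<forall>i. G j i \<in> \<rat>" and bint: "\<forall>j<m'. b j \<in> \<int>"
    and Adef: "A = {x. \<forall>j<m'. (\<Sum>i\<in>UNIV. G j i * x $ i) \<le> b j}" and tdi: "TDI m' G b"
    and Acomp: "compact A" and Ane: "A \<noteq> {}"
  shows "\<exists>x\<in>A. (\<forall>i. x $ i \<in> \<int>) \<and> (\<forall>y\<in>A. (\<Sum>i\<in>UNIV. \<phi> i * y $ i) \<le> (\<Sum>i\<in>UNIV. \<phi> i * x $ i))"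
proof -
  define r where "r j = (\<chi> i. G j i)" for j
  define ph where "ph = (\<chi> i. \<phi> i)"
  have rx: "r j \<bullet> x = (\<Sum>i\<in>UNIV. G j i * x $ i)" for j x unfolding r_def by (rule inner_row)
  have phx: "ph \<bullet> x = (\<Sum>i\<in>UNIV. \<phi> i * x $ i)" for x unfolding ph_def by (rule inner_row)
  have A': "A = {x. \<forall>j<m'. r j \<bullet> x \<le> b j}" using Adef by (simp add: rx)
  have "continuous_on A (\<lambda>x. ph \<bullet> x)" by (intro continuous_intros)
  then obtain xs where xs: "xs \<in> A" "\<forall>y\<in>A. ph \<bullet> y \<le> ph \<bullet> xs"
    using continuous_attains_sup[OF Acomp Ane] by blast
  define F where "F = A \<inter> {x. ph \<bullet> x \<ge> ph \<bullet> xs}"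
  have Fcomp: "compact F" unfolding F_def using Acomp closed_halfspace_ge by blast
  have "A = (\<Inter>j\<in>{..<m'}. {x. r j \<bullet> x \<le> b j})" using A' by auto
  then have "convex A" by (simp add: convex_INT convex_halfspace_le)
  then have Fconv: "convex F" unfolding F_def by (intro convex_Int convex_halfspace_ge)
  have Fne: "F \<noteq> {}" using xs by (auto simp: F_def)
  obtain x0 where ext: "x0 extreme_point_of F" using extreme_point_exists_convex[OF Fcomp Fconv Fne] by blast
  have x0F: "x0 \<in> F" using ext by (simp add: extreme_point_of_def)
  have x0A: "x0 \<in> A" and x0opt: "\<forall>y\<in>A. ph \<bullet> y \<le> ph \<bullet> x0" using x0F xs by (auto simp: F_def)
  have x0le: "\<And>j. j < m' \<Longrightarrow> r j \<bullet> x0 \<le> b j" using x0A A' by auto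
  define T where "T = {j. j < m' \<and> r j \<bullet> x0 = b j}"
  have Tfin: "finite T" "T \<subseteq> {..<m'}" by (auto simp: T_def)
  have spanT: "span (r ` T) = UNIV"
  proof (rule ccontr)
    assume "span (r ` T) \<noteq> UNIV"
    then have "span (r ` T) \<subset> span UNIV" by auto
    then obtain d where d: "d \<noteq> 0" "\<And>y. y \<in> span (r ` T) \<Longrightarrow> orthogonal d y"
      by (rule orthogonal_to_subspace_exists_gen) blast
    have dT: "r j \<bullet> d = 0" if "j \<in> T" for j
      using d(2)[of "r j"] that span_base[of "r j" "r ` T"] by (auto simp: orthogonal_def inner_commute)
    define N where "N = {j. j < m' \<and> j \<notin> T}"
    have Nfin: "finite N" by (simp add: N_def)
    have slack: "r j \<bullet> x0 < b j" if "j \<in> N" for j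
      using x0le[of j] that by (auto simp: N_def T_def)
    define \<epsilon> where "\<epsilon> = Min (insert 1 ((\<lambda>j. (b j - r j \<bullet> x0) / (\<bar>r j \<bullet> d\<bar> + 1)) ` N))"
    have e0: "0 < \<epsilon>" unfolding \<epsilon>_def using Nfin slack
      by (subst Min_gr_iff) (auto intro!: divide_pos_pos)
    have ebound: "\<epsilon> * \<bar>r j \<bullet> d\<bar> \<le> b j - r j \<bullet> x0" if j: "j \<in> N" for j
    proof -
      have "\<epsilon> \<le> (b j - r j \<bullet> x0) / (\<bar>r j \<bullet> d\<bar> + 1)" unfolding \<epsilon>_def using Nfin j by (intro Min_le) auto
      then have "\<epsilon> * (\<bar>r j \<bullet> d\<bar> + 1) \<le> b j - r j \<bullet> x0"
        by (simp add: le_divide_eq add_pos_nonneg)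
      moreover have "\<epsilon> * \<bar>r j \<bullet> d\<bar> \<le> \<epsilon> * (\<bar>r j \<bullet> d\<bar> + 1)" using e0 by simp
      ultimately show ?thesis by linarith
    qed
    define x1 where "x1 = x0 + \<epsilon> *\<^sub>R d"
    define x2 where "x2 = x0 - \<epsilon> *\<^sub>R d"
    have x1A: "x1 \<in> A" and x2A: "x2 \<in> A"
    proof -
      have "r j \<bullet> x1 \<le> b j \<and> r j \<bullet> x2 \<le> b j" if j: "j < m'" for j
      proof -
        have i1: "r j \<bullet> x1 = r j \<bullet> x0 + \<epsilon> * (r j \<bullet> d)" by (simp add: x1_def inner_add_right)
        have i2: "r j \<bullet> x2 = r j \<bullet> x0 - \<epsilon> * (r j \<bullet> d)" by (simp add: x2_def inner_diff_right)
        show ?thesis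
        proof (cases "j \<in> T")
          case True
          then have "r j \<bullet> x0 = b j" "r j \<bullet> d = 0" using dT[OF True] by (auto simp: T_def)
          then show ?thesis using i1 i2 by simp
        next
          case False
          then have jN: "j \<in> N" using j by (simp add: N_def)
          have m1: "\<epsilon> * (r j \<bullet> d) \<le> \<epsilon> * \<bar>r j \<bullet> d\<bar>" by (rule mult_left_mono) (use e0 in auto)
          have m2: "\<epsilon> * (- (r j \<bullet> d)) \<le> \<epsilon> * \<bar>r j \<bullet> d\<bar>" by (rule mult_left_mono) (use e0 in auto)
          show ?thesis using ebound[OF jN] i1 i2 m1 m2 by simp
        qed
      qed
      then show "x1 \<in> A" "x2 \<in> A" using A' by auto
    qed
    have "ph \<bullet> x1 \<le> ph \<bullet> x0" "ph \<bullet> x2 \<le> ph \<bullet> x0" using x0opt x1A x2A by auto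
    then have "\<epsilon> * (ph \<bullet> d) \<le> 0" "- (\<epsilon> * (ph \<bullet> d)) \<le> 0"
      by (auto simp: x1_def x2_def inner_add_right inner_diff_right)
    then have "\<epsilon> * (ph \<bullet> d) = 0" by linarith
    then have pd: "ph \<bullet> d = 0" using e0 by simp
    have x1F: "x1 \<in> F" and x2F: "x2 \<in> F"
      using x1A x2A x0F pd by (auto simp: F_def x1_def x2_def inner_add_right inner_diff_right)
    have "x2 + x1 = 2 *\<^sub>R x0" by (simp add: x1_def x2_def scaleR_2)
    then have mid: "midpoint x2 x1 = x0" by (simp add: midpoint_def)
    have "x2 \<noteq> x1"
    proof
      assume "x2 = x1"
      then have "\<epsilon> *\<^sub>R d = 0" unfolding x1_def x2_def by (rule vec_self_neg)
      then show False using e0 d(1) by simp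
    qed
    then have "x0 \<in> open_segment x2 x1" using midpoint_in_open_segment[of x2 x1] mid by simp
    then show False using ext x1F x2F by (auto simp: extreme_point_of_def)
  qed
  have "\<forall>j. \<exists>D::int. j < m' \<longrightarrow> D > 0 \<and> (\<forall>i. of_int D * G j i \<in> \<int>)"
  proof
    fix j show "\<exists>D::int. j < m' \<longrightarrow> D > 0 \<and> (\<forall>i. of_int D * G j i \<in> \<int>)"
    proof (cases "j < m'")
      case True
      then have "\<forall>i. G j i \<in> \<rat>" using Grat by blast
      then obtain D :: int where "D > 0 \<and> (\<forall>i. of_int D * G j i \<in> \<int>)" using common_denom by blast
      then show ?thesis by blast
    qed auto
  qed
  from choice[OF this] obtain D where D': "\<forall>j. j < m' \<longrightarrow> D j > 0 \<and> (\<forall>i. of_int (D j) * G j i \<in> \<int>)"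
    by blast
  then have D: "\<And>j. j < m' \<Longrightarrow> D j > 0 \<and> (\<forall>i. of_int (D j) * G j i \<in> \<int>)" by blast
  have integral: "x0 $ i \<in> \<int>" for i
  proof -
    have "axis i (1::real) \<in> span (r ` T)" using spanT by simp
    then obtain c where c: "axis i (1::real) = (\<Sum>j\<in>T. c j *\<^sub>R r j)" using span_coeffs[OF Tfin(1)] by blast
    have x0i: "x0 $ i = (\<Sum>j\<in>T. c j * b j)"
    proof -
      have "x0 $ i = axis i (1::real) \<bullet> x0" by (simp add: inner_axis')
      also have "\<dots> = (\<Sum>j\<in>T. c j * (r j \<bullet> x0))" unfolding c by (simp add: inner_sum_left)
      also have "\<dots> = (\<Sum>j\<in>T. c j * b j)" by (intro sum.cong refl) (simp add: T_def)
      finally show ?thesis .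
    qed
    define z where "z j = \<lceil>- c j / of_int (D j)\<rceil>" for j
    define \<psi> where "\<psi> j = (if j \<in> T then c j + of_int (D j) * of_int (z j) else 0)" for j
    have Dpos: "j \<in> T \<Longrightarrow> (0::real) < of_int (D j)" for j using D Tfin by auto
    have psi0: "0 \<le> \<psi> j" for j
    proof (cases "j \<in> T")
      case True
      have "- c j / of_int (D j) \<le> of_int (z j)" by (simp add: z_def)
      then have "(- c j / of_int (D j)) * of_int (D j) \<le> of_int (z j) * of_int (D j)"
        by (rule mult_right_mono) (use Dpos[OF True] in simp)
      then have "- c j \<le> of_int (D j) * of_int (z j)" using Dpos[OF True] by (simp add: mult.commute)
      then show ?thesis using True by (simp add: \<psi>_def)
    qed (simp add: \<psi>_def)
    define cc where "cc i' = (\<Sum>j<m'. G j i' * \<psi> j)" for i'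
    have sumT: "(\<Sum>j<m'. g j * \<psi> j) = (\<Sum>j\<in>T. g j * \<psi> j)" for g :: "nat \<Rightarrow> real"
      by (rule sum.mono_neutral_right) (use Tfin in \<open>auto simp: \<psi>_def\<close>)
    have ccint: "cc i' \<in> \<int>" for i'
    proof -
      have "cc i' = (\<Sum>j\<in>T. c j * G j i') + (\<Sum>j\<in>T. of_int (z j) * (of_int (D j) * G j i'))"
        unfolding cc_def sumT by (simp add: \<psi>_def sum.distrib algebra_simps)
      also have "(\<Sum>j\<in>T. c j * G j i') = (axis i (1::real)) $ i'"
        unfolding c by (simp add: r_def mult.commute)
      finally have e: "cc i' = axis i 1 $ i' + (\<Sum>j\<in>T. of_int (z j) * (of_int (D j) * G j i'))" .
      have "axis i (1::real) $ i' \<in> \<int>" by (simp add: axis_def)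
      moreover have "(\<Sum>j\<in>T. of_int (z j) * (of_int (D j) * G j i')) \<in> \<int>"
      proof (rule Ints_sum)
        fix j assume "j \<in> T"
        then have "of_int (D j) * G j i' \<in> \<int>" using D Tfin by auto
        then show "of_int (z j) * (of_int (D j) * G j i') \<in> \<int>" by (rule Ints_mult[OF Ints_of_int])
      qed
      ultimately show ?thesis using e by simp
    qed
    define S where "S = {\<psi> :: nat \<Rightarrow> real. (\<forall>j<m'. 0 \<le> \<psi> j) \<and> (\<forall>i. (\<Sum>j<m'. G j i * \<psi> j) = cc i)}"
    define obj where "obj = (\<lambda>\<psi>::nat \<Rightarrow> real. \<Sum>j<m'. \<psi> j * b j)"
    have psiS: "\<psi> \<in> S" using psi0 by (simp add: S_def cc_def)
    have dual: "(\<Sum>j<m'. \<psi>' j * (r j \<bullet> x0)) = (\<Sum>i'\<in>UNIV. cc i' * x0 $ i')" if "\<psi>' \<in> S" for \<psi>'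
    proof -
      have "(\<Sum>j<m'. \<psi>' j * (r j \<bullet> x0)) = (\<Sum>i'\<in>UNIV. (\<Sum>j<m'. G j i' * \<psi>' j) * x0 $ i')"
        unfolding rx by (simp add: sum_distrib_left sum_distrib_right sum.swap[of _ "{..<m'}"] algebra_simps)
      then show ?thesis using that by (simp add: S_def)
    qed
    have objpsi: "obj \<psi> = (\<Sum>i'\<in>UNIV. cc i' * x0 $ i')"
    proof -
      have "obj \<psi> = (\<Sum>j<m'. \<psi> j * (r j \<bullet> x0))"
        unfolding obj_def by (intro sum.cong refl) (simp add: \<psi>_def T_def)
      then show ?thesis using dual[OF psiS] by simp
    qed
    have minimal: "obj \<psi> \<le> obj \<psi>'" if "\<psi>' \<in> S" for \<psi>'
    proof -
      have "(\<Sum>j<m'. \<psi>' j * (r j \<bullet> x0)) \<le> obj \<psi>'"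
        unfolding obj_def using that x0le by (intro sum_mono mult_left_mono) (auto simp: S_def)
      then show ?thesis using dual[OF that] objpsi by simp
    qed
    have "\<exists>\<psi>\<in>S. (\<forall>j<m'. \<psi> j \<in> \<int>) \<and> (\<forall>\<psi>'\<in>S. obj \<psi> \<le> obj \<psi>')"
    proof -
      have "(\<exists>\<psi>\<in>S. \<forall>\<psi>'\<in>S. obj \<psi> \<le> obj \<psi>') \<longrightarrow> (\<exists>\<psi>\<in>S. (\<forall>j<m'. \<psi> j \<in> \<int>) \<and> (\<forall>\<psi>'\<in>S. obj \<psi> \<le> obj \<psi>'))"
        using tdi ccint unfolding TDI_def S_def obj_def Let_def by blast
      moreover have "\<exists>\<psi>\<in>S. \<forall>\<psi>'\<in>S. obj \<psi> \<le> obj \<psi>'" using psiS minimal by blast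
      ultimately show ?thesis by blast
    qed
    then obtain \<psi>s where psis: "\<psi>s \<in> S" "\<forall>j<m'. \<psi>s j \<in> \<int>" "\<forall>\<psi>'\<in>S. obj \<psi>s \<le> obj \<psi>'" by blast
    have E1: "obj \<psi>s = obj \<psi>" using psis(3) minimal[OF psis(1)] psiS by (simp add: order_antisym)
    have E2: "obj \<psi>s \<in> \<int>" unfolding obj_def using psis(2) bint by (intro Ints_sum Ints_mult) auto
    have E3: "obj \<psi> = x0 $ i + (\<Sum>j\<in>T. of_int (z j) * of_int (D j) * b j)"
    proof -
      have "obj \<psi> = (\<Sum>j\<in>T. b j * \<psi> j)" unfolding obj_def by (subst sumT[symmetric]) (simp add: mult.commute)
      also have "\<dots> = (\<Sum>j\<in>T. c j * b j) + (\<Sum>j\<in>T. of_int (z j) * of_int (D j) * b j)"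
        by (simp add: \<psi>_def sum.distrib algebra_simps)
      finally show ?thesis using x0i by simp
    qed
    have E4: "(\<Sum>j\<in>T. of_int (z j) * of_int (D j) * b j) \<in> \<int>"
      using bint Tfin by (intro Ints_sum Ints_mult) auto
    have "x0 $ i = obj \<psi>s - (\<Sum>j\<in>T. of_int (z j) * of_int (D j) * b j)" using E1 E3 by simp
    then show ?thesis using Ints_diff[OF E2 E4] by simp
  qed
  show ?thesis using x0A x0opt integral by (auto simp: phx)
qed

theorem theorem4p1:
  fixes V :: "'n::finite \<Rightarrow> real set" and f :: "'n \<Rightarrow> real \<Rightarrow> real"
    and m :: nat and g :: "nat \<Rightarrow> real^'n \<Rightarrow> real" and A :: "(real^'n) set" and \<alpha> :: real
  assumes V_fin: "\<forall>i. finite (V i) \<and> V i \<noteq> {} \<and> V i \<subseteq> {0..}"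
    and f_pmf: "\<forall>i. (\<forall>x\<in>V i. 0 < f i x) \<and> (\<Sum>x\<in>V i. f i x) = 1"
    and A_def: "A = {x. \<forall>j<m. g j x \<le> 0}"
    and g_convex: "\<forall>j<m. convex_on UNIV (g j)"
    and g_C1: "\<forall>j<m. \<exists>D. (\<forall>x. (g j has_derivative blinfun_apply (D x)) (at x)) \<and> continuous_on UNIV D"
    and A_nonempty: "A \<noteq> {}"
    and A_compact: "compact A"
    and A_nonneg: "A \<subseteq> {x. \<forall>i. 0 \<le> x $ i}"
    and \<alpha>: "0 \<le> \<alpha>" "\<alpha> \<le> 1"
  shows
   "((\<exists>m' G b. (\<forall>j<m'. \<forall>i. G j i \<in> \<rat>) \<and> (\<forall>j<m'. b j \<in> \<int>) \<and>
        A = {x. \<forall>j<m'. (\<Sum>i\<in>UNIV. G j i * x $ i) \<le> b j} \<and> TDI m' G b)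
      \<longrightarrow> (\<exists>a p. feasible A V a \<and> BIC V f a p \<and> integral_auction V a \<and>
             (\<forall>a' p'. feasible A V a' \<and> BIC V f a' p' \<longrightarrow> Obj \<alpha> V f a' p' \<le> Obj \<alpha> V f a p)))
    \<and> (\<forall>a p. feasible A V a \<and> DSIC V a p \<and>
             (\<forall>a' p'. feasible A V a' \<and> DSIC V a' p' \<longrightarrow> Obj \<alpha> V f a' p' \<le> Obj \<alpha> V f a p)
          \<longrightarrow> (\<forall>a' p'. feasible A V a' \<and> BIC V f a' p' \<longrightarrow> Obj \<alpha> V f a' p' \<le> Obj \<alpha> V f a p))
    \<and> (\<forall>sel :: ('n \<Rightarrow> real) \<Rightarrow> real^'n.
          (\<forall>v\<in>PiE UNIV V. sel (\<lambda>j. ivv \<alpha> V f j (v j)) \<in> A \<and>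
             (\<forall>x\<in>A. (\<Sum>i\<in>UNIV. ivv \<alpha> V f i (v i) * x $ i)
                     \<le> (\<Sum>i\<in>UNIV. ivv \<alpha> V f i (v i) * sel (\<lambda>j. ivv \<alpha> V f j (v j)) $ i)))
        \<longrightarrow> (let a = (\<lambda>v i. sel (\<lambda>j. ivv \<alpha> V f j (v j)) $ i); p = pay_formula V a
             in feasible A V a \<and> DSIC V a p \<and>
                (\<forall>a' p'. feasible A V a' \<and> BIC V f a' p' \<longrightarrow> Obj \<alpha> V f a' p' \<le> Obj \<alpha> V f a p)))"
proof -
  interpret S: setting V f \<alpha> using V_fin f_pmf \<alpha> by unfold_locales
  have part3: "\<forall>sel :: ('n \<Rightarrow> real) \<Rightarrow> real^'n.
          (\<forall>v\<in>PiE UNIV V. sel (\<lambda>j. ivv \<alpha> V f j (v j)) \<in> A \<and>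
             (\<forall>x\<in>A. (\<Sum>i\<in>UNIV. ivv \<alpha> V f i (v i) * x $ i)
                     \<le> (\<Sum>i\<in>UNIV. ivv \<alpha> V f i (v i) * sel (\<lambda>j. ivv \<alpha> V f j (v j)) $ i)))
        \<longrightarrow> (let a = (\<lambda>v i. sel (\<lambda>j. ivv \<alpha> V f j (v j)) $ i); p = pay_formula V a
             in feasible A V a \<and> DSIC V a p \<and>
                (\<forall>a' p'. feasible A V a' \<and> BIC V f a' p' \<longrightarrow> Obj \<alpha> V f a' p' \<le> Obj \<alpha> V f a p))"
  proof (intro allI impI)
    fix sel :: "('n \<Rightarrow> real) \<Rightarrow> real^'n"
    assume selP: "\<forall>v\<in>PiE UNIV V. sel (\<lambda>j. ivv \<alpha> V f j (v j)) \<in> A \<and>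
             (\<forall>x\<in>A. (\<Sum>i\<in>UNIV. ivv \<alpha> V f i (v i) * x $ i)
                     \<le> (\<Sum>i\<in>UNIV. ivv \<alpha> V f i (v i) * sel (\<lambda>j. ivv \<alpha> V f j (v j)) $ i))"
    define a where "a = (\<lambda>v i. sel (\<lambda>j. ivv \<alpha> V f j (v j)) $ i)"
    have feas: "feasible A V a" using selP by (simp add: feasible_def a_def vec_lambda_eta)
    have dsic: "DSIC V a (pay_formula V a)" unfolding a_def by (rule S.DSIC_M[OF A_nonneg selP])
    have opt: "Obj \<alpha> V f a' p' \<le> Obj \<alpha> V f a (pay_formula V a)" if "feasible A V a' \<and> BIC V f a' p'" for a' p'
    proof -
      have "Obj \<alpha> V f a' p' \<le> (\<Sum>v\<in>PiE UNIV V. prof_prob f v * (\<Sum>i\<in>UNIV. ivv \<alpha> V f i (v i) * a' v i))"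
        using that by (intro S.obj_BIC_bound) auto
      also have "\<dots> \<le> (\<Sum>v\<in>PiE UNIV V. prof_prob f v * (\<Sum>i\<in>UNIV. ivv \<alpha> V f i (v i) * sel (\<lambda>j. ivv \<alpha> V f j (v j)) $ i))"
        using that by (intro S.feasible_bound[OF selP]) auto
      also have "\<dots> = Obj \<alpha> V f a (pay_formula V a)"
        unfolding a_def by (rule S.obj_M[symmetric])
      finally show ?thesis .
    qed
    show "let a = (\<lambda>v i. sel (\<lambda>j. ivv \<alpha> V f j (v j)) $ i); p = pay_formula V a
             in feasible A V a \<and> DSIC V a p \<and>
                (\<forall>a' p'. feasible A V a' \<and> BIC V f a' p' \<longrightarrow> Obj \<alpha> V f a' p' \<le> Obj \<alpha> V f a p)"
      unfolding Let_def a_def[symmetric] using feas dsic opt by blast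
  qed
  have exsel: "\<exists>x. x \<in> A \<and> (\<forall>y\<in>A. (\<Sum>i\<in>UNIV. \<phi> i * y $ i) \<le> (\<Sum>i\<in>UNIV. \<phi> i * x $ i))" for \<phi> :: "'n \<Rightarrow> real"
  proof -
    have "continuous_on A (\<lambda>x. (\<Sum>i\<in>UNIV. \<phi> i * x $ i))" by (intro continuous_intros)
    then show ?thesis using continuous_attains_sup[OF A_compact A_nonempty] by blast
  qed
  define sel0 where "sel0 \<phi> = (SOME x. x \<in> A \<and> (\<forall>y\<in>A. (\<Sum>i\<in>UNIV. \<phi> i * y $ i) \<le> (\<Sum>i\<in>UNIV. \<phi> i * x $ i)))" for \<phi>
  have sel0P: "sel0 \<phi> \<in> A \<and> (\<forall>y\<in>A. (\<Sum>i\<in>UNIV. \<phi> i * y $ i) \<le> (\<Sum>i\<in>UNIV. \<phi> i * sel0 \<phi> $ i))" for \<phi>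
    unfolding sel0_def by (rule someI_ex[OF exsel])
  define a0 where "a0 = (\<lambda>v i. sel0 (\<lambda>j. ivv \<alpha> V f j (v j)) $ i)"
  have M0: "feasible A V a0 \<and> DSIC V a0 (pay_formula V a0) \<and>
       (\<forall>a' p'. feasible A V a' \<and> BIC V f a' p' \<longrightarrow> Obj \<alpha> V f a' p' \<le> Obj \<alpha> V f a0 (pay_formula V a0))"
  proof -
    have P: "\<forall>v\<in>PiE UNIV V. sel0 (\<lambda>j. ivv \<alpha> V f j (v j)) \<in> A \<and>
             (\<forall>x\<in>A. (\<Sum>i\<in>UNIV. ivv \<alpha> V f i (v i) * x $ i)
                     \<le> (\<Sum>i\<in>UNIV. ivv \<alpha> V f i (v i) * sel0 (\<lambda>j. ivv \<alpha> V f j (v j)) $ i))"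
      by (intro ballI) (rule sel0P)
    show ?thesis using mp[OF spec[OF part3, of sel0] P] unfolding a0_def Let_def by blast
  qed
  have part2: "\<forall>a p. feasible A V a \<and> DSIC V a p \<and>
             (\<forall>a' p'. feasible A V a' \<and> DSIC V a' p' \<longrightarrow> Obj \<alpha> V f a' p' \<le> Obj \<alpha> V f a p)
          \<longrightarrow> (\<forall>a' p'. feasible A V a' \<and> BIC V f a' p' \<longrightarrow> Obj \<alpha> V f a' p' \<le> Obj \<alpha> V f a p)"
  proof (intro allI impI)
    fix a p a' p'
    assume h: "feasible A V a \<and> DSIC V a p \<and>
             (\<forall>a' p'. feasible A V a' \<and> DSIC V a' p' \<longrightarrow> Obj \<alpha> V f a' p' \<le> Obj \<alpha> V f a p)"
      and h': "feasible A V a' \<and> BIC V f a' p'"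
    have "Obj \<alpha> V f a' p' \<le> Obj \<alpha> V f a0 (pay_formula V a0)" using M0 h' by blast
    also have "\<dots> \<le> Obj \<alpha> V f a p" using M0 h by blast
    finally show "Obj \<alpha> V f a' p' \<le> Obj \<alpha> V f a p" .
  qed
  have part1: "(\<exists>m' G b. (\<forall>j<m'. \<forall>i. G j i \<in> \<rat>) \<and> (\<forall>j<m'. b j \<in> \<int>) \<and>
        A = {x. \<forall>j<m'. (\<Sum>i\<in>UNIV. G j i * x $ i) \<le> b j} \<and> TDI m' G b)
      \<longrightarrow> (\<exists>a p. feasible A V a \<and> BIC V f a p \<and> integral_auction V a \<and>
             (\<forall>a' p'. feasible A V a' \<and> BIC V f a' p' \<longrightarrow> Obj \<alpha> V f a' p' \<le> Obj \<alpha> V f a p))"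
  proof
    assume "\<exists>m' G b. (\<forall>j<m'. \<forall>i. G j i \<in> \<rat>) \<and> (\<forall>j<m'. b j \<in> \<int>) \<and>
        A = {x. \<forall>j<m'. (\<Sum>i\<in>UNIV. G j i * x $ i) \<le> b j} \<and> TDI m' G b"
    then obtain m' G b where Gb: "\<forall>j<m'. \<forall>i. G j i \<in> \<rat>" "\<forall>j<m'. b j \<in> \<int>"
        "A = {x. \<forall>j<m'. (\<Sum>i\<in>UNIV. G j i * x $ i) \<le> b j}" "TDI m' G b" by blast
    have ex1: "\<exists>x. x \<in> A \<and> (\<forall>i. x $ i \<in> \<int>) \<and> (\<forall>y\<in>A. (\<Sum>i\<in>UNIV. \<phi> i * y $ i) \<le> (\<Sum>i\<in>UNIV. \<phi> i * x $ i))"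
      for \<phi> :: "'n \<Rightarrow> real"
      using tdi_max[OF Gb A_compact A_nonempty, of \<phi>] by blast
    define sel1 where "sel1 \<phi> = (SOME x. x \<in> A \<and> (\<forall>i. x $ i \<in> \<int>) \<and> (\<forall>y\<in>A. (\<Sum>i\<in>UNIV. \<phi> i * y $ i) \<le> (\<Sum>i\<in>UNIV. \<phi> i * x $ i)))" for \<phi>
    have sel1P: "sel1 \<phi> \<in> A \<and> (\<forall>i. sel1 \<phi> $ i \<in> \<int>) \<and> (\<forall>y\<in>A. (\<Sum>i\<in>UNIV. \<phi> i * y $ i) \<le> (\<Sum>i\<in>UNIV. \<phi> i * sel1 \<phi> $ i))" for \<phi>
      unfolding sel1_def by (rule someI_ex[OF ex1])
    define a1 where "a1 = (\<lambda>v i. sel1 (\<lambda>j. ivv \<alpha> V f j (v j)) $ i)"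
    have M1: "feasible A V a1 \<and> DSIC V a1 (pay_formula V a1) \<and>
       (\<forall>a' p'. feasible A V a' \<and> BIC V f a' p' \<longrightarrow> Obj \<alpha> V f a' p' \<le> Obj \<alpha> V f a1 (pay_formula V a1))"
    proof -
      have P: "\<forall>v\<in>PiE UNIV V. sel1 (\<lambda>j. ivv \<alpha> V f j (v j)) \<in> A \<and>
               (\<forall>x\<in>A. (\<Sum>i\<in>UNIV. ivv \<alpha> V f i (v i) * x $ i)
                       \<le> (\<Sum>i\<in>UNIV. ivv \<alpha> V f i (v i) * sel1 (\<lambda>j. ivv \<alpha> V f j (v j)) $ i))"
      proof (intro ballI)
        fix v :: "'n \<Rightarrow> real"
        have "sel1 (\<lambda>j. ivv \<alpha> V f j (v j)) \<in> A \<and> (\<forall>i. sel1 (\<lambda>j. ivv \<alpha> V f j (v j)) $ i \<in> \<int>) \<and>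
          (\<forall>y\<in>A. (\<Sum>i\<in>UNIV. ivv \<alpha> V f i (v i) * y $ i) \<le> (\<Sum>i\<in>UNIV. ivv \<alpha> V f i (v i) * sel1 (\<lambda>j. ivv \<alpha> V f j (v j)) $ i))"
          by (rule sel1P)
        then show "sel1 (\<lambda>j. ivv \<alpha> V f j (v j)) \<in> A \<and>
             (\<forall>x\<in>A. (\<Sum>i\<in>UNIV. ivv \<alpha> V f i (v i) * x $ i)
                     \<le> (\<Sum>i\<in>UNIV. ivv \<alpha> V f i (v i) * sel1 (\<lambda>j. ivv \<alpha> V f j (v j)) $ i))" by blast
      qed
      show ?thesis using mp[OF spec[OF part3, of sel1] P] unfolding a1_def Let_def by blast
    qed
    have bic1: "BIC V f a1 (pay_formula V a1)" using M1 S.DSIC_BIC by blast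
    have int1: "integral_auction V a1"
      unfolding integral_auction_def
    proof (intro ballI allI)
      fix v i
      have z: "a1 v i \<in> \<int>" using sel1P by (simp add: a1_def)
      have nn: "0 \<le> a1 v i" using sel1P A_nonneg by (force simp: a1_def)
      obtain n where n: "a1 v i = of_int n" using z by (auto elim: Ints_cases)
      then have "n \<ge> 0" using nn by simp
      then have "a1 v i = of_nat (nat n)" using n by simp
      then show "a1 v i \<in> \<nat>" by (simp add: Nats_def)
    qed
    show "\<exists>a p. feasible A V a \<and> BIC V f a p \<and> integral_auction V a \<and>
             (\<forall>a' p'. feasible A V a' \<and> BIC V f a' p' \<longrightarrow> Obj \<alpha> V f a' p' \<le> Obj \<alpha> V f a p)"
      using M1 bic1 int1 by blast
  qed
  show ?thesis using part1 part2 part3 by blast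
qed

end
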